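(* Let $D=(\alpha,\beta)_{\mathbb Q}$ be a quaternion division algebra and $p\neq2$ a prime with $v_p(\alpha)=v_p(\beta)=0$ and $\alpha$ a square in $\mathbb Q_p$. Identify $G_p$ with $\mathrm{SL}_2(\mathbb Q_p)$ via the isomorphism $x_1+x_2e_2+x_3e_3+x_4e_4\mapsto\begin{pmatrix}x_1+x_2\sqrt\alpha & \beta(x_3+x_4\sqrt\alpha)\\ x_3-x_4\sqrt\alpha & x_1-x_2\sqrt\alpha\end{pmatrix}$. Then the action of the norm-1 group $G$ of $D$ on the tree $\Delta_p$ of $\mathrm{SL}_2(\mathbb Q_p)$ is Weyl transitive.
   Context: $(\alpha,\beta)_{\mathbb Q}$ has basis $1,e_2,e_3,e_4$ with $e_2^2=\alpha$, $e_3^2=\beta$, $e_2e_3=-e_3e_2=e_4$ and norm $N(x)=x_1^2-\alpha x_2^2-\beta x_3^2+\alpha\beta x_4^2$; $D_p=D\otimes\mathbb Q_p$; $G$, $G_p$ are the norm-1 groups of $D$, $D_p$, and $G\subset G_p$. $\Delta_p$ is the Bruhat–Tits tree of $\mathrm{SL}_2(\mathbb Q_p)$ (vertices: homothety classes of $\mathbb Z_p$-lattices in $\mathbb Q_p^2$, adjacent if representatives satisfy $L\supset L'\supset pL$), a building whose chambers are edges, with infinite dihedral Weyl group $W$ and Weyl distance $\delta$. The action is Weyl transitive if for every $w\in W$, $G$ is transitive on pairs of chambers $(C,C')$ with $\delta(C,C')=w$. *)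

theory Defs
  imports Complex_Main "HOL-Computational_Algebra.Primes"
begin

definition pval :: "nat \<Rightarrow> rat \<Rightarrow> int" where
  "pval p q = (let (a, b) = quotient_of q in
     int (multiplicity (int p) a) - int (multiplicity (int p) b))"

text \<open>A field 'k of characteristic 0 with a valuation v (meaningful on nonzero
  elements) extending the p-adic valuation of Q, complete, and in which Q is dense.
  These properties characterise Q_p up to unique isomorphism.\<close>

definition is_Qp :: "nat \<Rightarrow> ('k::field_char_0 \<Rightarrow> int) \<Rightarrow> bool" where
  "is_Qp p v \<longleftrightarrow>
     (\<forall>x y. x \<noteq> 0 \<longrightarrow> y \<noteq> 0 \<longrightarrow> v (x * y) = v x + v y) \<and>
     (\<forall>x y. x \<noteq> 0 \<longrightarrow> y \<noteq> 0 \<longrightarrow> x + y \<noteq> 0 \<longrightarrow> v (x + y) \<ge> min (v x) (v y)) \<and>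
     (\<forall>q. q \<noteq> 0 \<longrightarrow> v (of_rat q) = pval p q) \<and>
     (\<forall>x N. \<exists>q. x = of_rat q \<or> v (x - of_rat q) \<ge> N) \<and>
     (\<forall>f :: nat \<Rightarrow> 'k.
        (\<forall>N. \<exists>M. \<forall>m\<ge>M. \<forall>n\<ge>M. f m = f n \<or> v (f m - f n) \<ge> N) \<longrightarrow>
        (\<exists>L. \<forall>N. \<exists>M. \<forall>n\<ge>M. f n = L \<or> v (f n - L) \<ge> N))"

definition Zp :: "('k::field_char_0 \<Rightarrow> int) \<Rightarrow> 'k set" where
  "Zp v = {x. x = 0 \<or> v x \<ge> 0}"

type_synonym quat = "rat \<times> rat \<times> rat \<times> rat"

fun qmult :: "rat \<Rightarrow> rat \<Rightarrow> quat \<Rightarrow> quat \<Rightarrow> quat" where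
  "qmult \<alpha> \<beta> (a1, a2, a3, a4) (b1, b2, b3, b4) =
     (a1*b1 + \<alpha>*a2*b2 + \<beta>*a3*b3 - \<alpha>*\<beta>*a4*b4,
      a1*b2 + a2*b1 - \<beta>*a3*b4 + \<beta>*a4*b3,
      a1*b3 + a3*b1 + \<alpha>*a2*b4 - \<alpha>*a4*b2,
      a1*b4 + a4*b1 + a2*b3 - a3*b2)"

fun qnorm :: "rat \<Rightarrow> rat \<Rightarrow> quat \<Rightarrow> rat" where
  "qnorm \<alpha> \<beta> (x1, x2, x3, x4) = x1^2 - \<alpha>*x2^2 - \<beta>*x3^2 + \<alpha>*\<beta>*x4^2"

definition quat_division_algebra :: "rat \<Rightarrow> rat \<Rightarrow> bool" where
  "quat_division_algebra \<alpha> \<beta> \<longleftrightarrow> \<alpha> \<noteq> 0 \<and> \<beta> \<noteq> 0 \<and>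
     (\<forall>x. x \<noteq> (0,0,0,0) \<longrightarrow> (\<exists>y. qmult \<alpha> \<beta> x y = (1,0,0,0)))"

definition normone :: "rat \<Rightarrow> rat \<Rightarrow> quat set" where
  "normone \<alpha> \<beta> = {x. qnorm \<alpha> \<beta> x = 1}"

text \<open>The identification G_p = SL_2(Q_p), with s a chosen square root of alpha;
  matrices act on column vectors (u1,u2).\<close>
fun quat_mat_act :: "rat \<Rightarrow> 'k::field_char_0 \<Rightarrow> quat \<Rightarrow> 'k \<times> 'k \<Rightarrow> 'k \<times> 'k" where
  "quat_mat_act \<beta> s (x1, x2, x3, x4) (u1, u2) =
     ((of_rat x1 + of_rat x2 * s) * u1 + of_rat \<beta> * (of_rat x3 + of_rat x4 * s) * u2,
      (of_rat x3 - of_rat x4 * s) * u1 + (of_rat x1 - of_rat x2 * s) * u2)"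

definition lattice_span :: "('k::field_char_0 \<Rightarrow> int) \<Rightarrow> 'k \<times> 'k \<Rightarrow> 'k \<times> 'k \<Rightarrow> ('k \<times> 'k) set" where
  "lattice_span v e f =
     {(x * fst e + y * fst f, x * snd e + y * snd f) | x y. x \<in> Zp v \<and> y \<in> Zp v}"

definition is_lattice :: "('k::field_char_0 \<Rightarrow> int) \<Rightarrow> ('k \<times> 'k) set \<Rightarrow> bool" where
  "is_lattice v L \<longleftrightarrow> (\<exists>e f. fst e * snd f - snd e * fst f \<noteq> 0 \<and> L = lattice_span v e f)"

definition scale_set :: "'k::field \<Rightarrow> ('k \<times> 'k) set \<Rightarrow> ('k \<times> 'k) set" where
  "scale_set c L = (\<lambda>u. (c * fst u, c * snd u)) ` L"

definition hclass :: "('k \<times> 'k) set \<Rightarrow> ('k::field \<times> 'k) set set" where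
  "hclass L = {scale_set c L | c. c \<noteq> 0}"

definition is_vertex :: "('k::field_char_0 \<Rightarrow> int) \<Rightarrow> ('k \<times> 'k) set set \<Rightarrow> bool" where
  "is_vertex v X \<longleftrightarrow> (\<exists>L. is_lattice v L \<and> X = hclass L)"

definition adjacent :: "nat \<Rightarrow> ('k::field_char_0 \<times> 'k) set set \<Rightarrow> ('k \<times> 'k) set set \<Rightarrow> bool" where
  "adjacent p X Y \<longleftrightarrow> (\<exists>L\<in>X. \<exists>L'\<in>Y. scale_set (of_nat p) L \<subseteq> L' \<and> L' \<subseteq> L)"

definition is_chamber :: "nat \<Rightarrow> ('k::field_char_0 \<Rightarrow> int) \<Rightarrow> ('k \<times> 'k) set set set \<Rightarrow> bool" where
  "is_chamber p v C \<longleftrightarrow>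
     (\<exists>X Y. is_vertex v X \<and> is_vertex v Y \<and> X \<noteq> Y \<and> adjacent p X Y \<and> C = {X, Y})"

text \<open>Type of a vertex: valuation of the determinant of a basis of a representing
  lattice, modulo 2 (the standard SL_2-invariant type function).\<close>
definition vertex_type :: "('k::field_char_0 \<Rightarrow> int) \<Rightarrow> ('k \<times> 'k) set set \<Rightarrow> int \<Rightarrow> bool" where
  "vertex_type v X t \<longleftrightarrow> (\<exists>e f. fst e * snd f - snd e * fst f \<noteq> 0 \<and>
       lattice_span v e f \<in> X \<and> t = v (fst e * snd f - snd e * fst f) mod 2)"

definition gallery :: "nat \<Rightarrow> ('k::field_char_0 \<Rightarrow> int) \<Rightarrow> ('k \<times> 'k) set set set list \<Rightarrow> bool" where
  "gallery p v cs \<longleftrightarrow> cs \<noteq> [] \<and> (\<forall>C\<in>set cs. is_chamber p v C) \<and>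
     (\<forall>i. Suc i < length cs \<longrightarrow> cs ! i \<noteq> cs ! Suc i \<and> cs ! i \<inter> cs ! Suc i \<noteq> {})"

text \<open>The infinite dihedral group W = <s_0, s_1> is represented by
  reduced words, i.e. lists of types; delta(C,C') = w holds iff w is the type
  sequence of the panels crossed by a minimal gallery from C to C'.\<close>
definition weyl_dist :: "nat \<Rightarrow> ('k::field_char_0 \<Rightarrow> int) \<Rightarrow> ('k \<times> 'k) set set set \<Rightarrow>
    ('k \<times> 'k) set set set \<Rightarrow> int list \<Rightarrow> bool" where
  "weyl_dist p v C C' w \<longleftrightarrow>
     (\<exists>cs. gallery p v cs \<and> hd cs = C \<and> last cs = C' \<and>
        (\<forall>cs'. gallery p v cs' \<and> hd cs' = C \<and> last cs' = C' \<longrightarrow> length cs \<le> length cs') \<and>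
        length w + 1 = length cs \<and>
        (\<forall>i < length w. \<exists>X. X \<in> cs ! i \<inter> cs ! Suc i \<and> vertex_type v X (w ! i)))"

definition vertex_act :: "('k \<times> 'k \<Rightarrow> 'k \<times> 'k) \<Rightarrow> ('k \<times> 'k) set set \<Rightarrow> ('k \<times> 'k) set set" where
  "vertex_act M X = (\<lambda>L. M ` L) ` X"

definition chamber_act :: "('k \<times> 'k \<Rightarrow> 'k \<times> 'k) \<Rightarrow> ('k \<times> 'k) set set set \<Rightarrow> ('k \<times> 'k) set set set" where
  "chamber_act M C = vertex_act M ` C"

definition weyl_transitive ::
  "nat \<Rightarrow> ('k::field_char_0 \<Rightarrow> int) \<Rightarrow> 'g set \<Rightarrow> ('g \<Rightarrow> 'k \<times> 'k \<Rightarrow> 'k \<times> 'k) \<Rightarrow> bool" where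
  "weyl_transitive p v G act \<longleftrightarrow>
     (\<forall>w C1 C1' C2 C2'. is_chamber p v C1 \<and> is_chamber p v C1' \<and>
        is_chamber p v C2 \<and> is_chamber p v C2' \<and>
        weyl_dist p v C1 C1' w \<and> weyl_dist p v C2 C2' w \<longrightarrow>
        (\<exists>g\<in>G. chamber_act (act g) C1 = C2 \<and> chamber_act (act g) C1' = C2'))"

end

theory Submission
  imports Defs
begin
locale qpv =
  fixes p :: nat and v :: "'k::field_char_0 \<Rightarrow> int"
  assumes Qp: "is_Qp p v" and pr: "prime p"
begin

definition sm :: "int \<Rightarrow> 'k \<Rightarrow> bool" where
  "sm K x \<longleftrightarrow> x = 0 \<or> K \<le> v x"

abbreviation pi :: 'k where "pi \<equiv> of_nat p"

lemma v_mult: "x \<noteq> 0 \<Longrightarrow> y \<noteq> 0 \<Longrightarrow> v (x*y) = v x + v y"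
  using Qp unfolding is_Qp_def by blast

lemma v_add: "x \<noteq> 0 \<Longrightarrow> y \<noteq> 0 \<Longrightarrow> x + y \<noteq> 0 \<Longrightarrow> v (x+y) \<ge> min (v x) (v y)"
  using Qp unfolding is_Qp_def by blast

lemma v_rat: "q \<noteq> 0 \<Longrightarrow> v (of_rat q) = pval p q"
  using Qp unfolding is_Qp_def by blast

lemma v_dense: "\<exists>q. sm N (of_rat q - x)"
proof -
  obtain q where "x = of_rat q \<or> v (x - of_rat q) \<ge> N" using Qp unfolding is_Qp_def by blast
  moreover have "v (x - of_rat q) = v (of_rat q - x)" if "x \<noteq> of_rat q"
  proof -
    have "v (-1 * (x - of_rat q)) = v (-1) + v (x - of_rat q)" using that by (intro v_mult) auto
    moreover have "v ((-1::'k) * -1) = v (-1) + v (-1)" by (intro v_mult) auto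
    moreover have "v (1::'k) = v 1 + v 1" using v_mult[of 1 1] by simp
    ultimately show ?thesis by (simp add: algebra_simps)
  qed
  ultimately show ?thesis unfolding sm_def by (metis right_minus_eq)
qed

lemma v_one[simp]: "v 1 = 0"
  using v_mult[of 1 1] by simp

lemma v_m1[simp]: "v (-1) = 0"
  using v_mult[of "-1" "-1"] by simp

lemma v_uminus[simp]: "v (- x) = v x"
proof (cases "x = 0")
  case False
  then show ?thesis using v_mult[of "-1" x] by simp
qed simp

lemma v_inverse: "x \<noteq> 0 \<Longrightarrow> v (inverse x) = - v x"
  using v_mult[of x "inverse x"] by simp

lemma v_divide: "x \<noteq> 0 \<Longrightarrow> y \<noteq> 0 \<Longrightarrow> v (x / y) = v x - v y"
  by (simp add: divide_inverse v_mult v_inverse)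

lemma p_pos: "p > 1" using pr prime_gt_1_nat by blast

lemma p_nz[simp]: "p \<noteq> 0" using p_pos by simp
lemma pi_nz[simp]: "pi \<noteq> 0" using p_pos by simp

lemma v_pi[simp]: "v pi = 1"
proof -
  have "v (of_rat (of_nat p)) = pval p (of_nat p)" using p_pos by (intro v_rat) auto
  moreover have "multiplicity (int p) (int p) = 1"
    using pr p_pos by (intro multiplicity_self) auto
  ultimately show ?thesis by (simp add: pval_def)
qed

lemma v_pow[simp]: "v (pi ^ n) = int n"
proof (induction n)
  case (Suc n)
  have "v (pi * pi ^ n) = v pi + v (pi ^ n)" by (intro v_mult) auto
  then show ?case using Suc by simp
qed simp

lemma exists_val: "\<exists>l. l \<noteq> 0 \<and> v l = j"
proof (cases "j \<ge> 0")
  case True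
  then show ?thesis by (intro exI[of _ "pi ^ nat j"]) auto
next
  case False
  then show ?thesis by (intro exI[of _ "inverse (pi ^ nat (-j))"]) (auto simp: v_inverse)
qed

lemma sm_0[simp]: "sm K 0" by (simp add: sm_def)
lemma sm_one: "sm 0 1" by (simp add: sm_def)
lemma sm_add: "sm K x \<Longrightarrow> sm K y \<Longrightarrow> sm K (x + y)"
  unfolding sm_def using v_add[of x y] by fastforce
lemma sm_uminus: "sm K x \<Longrightarrow> sm K (- x)" by (simp add: sm_def)
lemma sm_uminus_iff[simp]: "sm K (- x) = sm K x" by (simp add: sm_def)
lemma sm_diff: "sm K x \<Longrightarrow> sm K y \<Longrightarrow> sm K (x - y)"
  using sm_add[of K x "-y"] by simp
lemma sm_mult: "sm K x \<Longrightarrow> sm L y \<Longrightarrow> sm (K + L) (x * y)"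
  unfolding sm_def by (cases "x = 0"; cases "y = 0") (auto simp: v_mult)
lemma sm_mult': "sm K x \<Longrightarrow> sm L y \<Longrightarrow> K + L = M \<Longrightarrow> sm M (x * y)"
  using sm_mult by blast
lemma sm_mono: "sm K x \<Longrightarrow> L \<le> K \<Longrightarrow> sm L x"
  unfolding sm_def by auto
lemma sm_pow: "sm (int n) (pi ^ n)" by (simp add: sm_def)
lemma sm_pi: "sm 1 pi" by (simp add: sm_def)
lemma sm_ex: "\<exists>K. sm K x" unfolding sm_def by auto
lemma sm_ex_le: "\<exists>K. K \<le> M \<and> sm K x" unfolding sm_def
  by (cases "x = 0") (auto intro: exI[of _ "min M (v x)"])
lemma sm_div_pi: "sm (K + 1) x \<longleftrightarrow> sm K (x / pi)"
  unfolding sm_def by (cases "x = 0") (auto simp: v_divide)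
lemma sm_div_pi': "sm 1 x \<longleftrightarrow> sm 0 (x / pi)"
  using sm_div_pi[of 0 x] by simp
lemma sm_unit_inv: "sm 0 x \<Longrightarrow> \<not> sm 1 x \<Longrightarrow> sm 0 (inverse x)"
  unfolding sm_def by (auto simp: v_inverse)
lemma sm_unit_nz: "\<not> sm 1 x \<Longrightarrow> x \<noteq> 0" unfolding sm_def by auto
lemma sm_inverse: "x \<noteq> 0 \<Longrightarrow> sm (- v x) (inverse x)"
  unfolding sm_def by (auto simp: v_inverse)
lemma sm_self: "sm (v x) x" unfolding sm_def by auto

lemma v_close: assumes "a \<noteq> 0" "sm (v a + 1) (b - a)" shows "b \<noteq> 0" "v b = v a"
proof -
  show "b \<noteq> 0" using assms unfolding sm_def by auto
  show "v b = v a"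
  proof (cases "b = a")
    case False
    have 1: "v (b - a) \<ge> v a + 1" using assms False unfolding sm_def by auto
    have "v (a + (b - a)) \<ge> min (v a) (v (b - a))" using False \<open>b \<noteq> 0\<close> assms by (intro v_add) auto
    hence "v b \<ge> min (v a) (v (b - a))" by simp
    moreover have "v (b + (a - b)) \<ge> min (v b) (v (a - b))" using False \<open>b \<noteq> 0\<close> assms by (intro v_add) auto
    hence "v a \<ge> min (v b) (v (-(b - a)))" by simp
    hence "v a \<ge> min (v b) (v (b - a))" by (simp only: v_uminus)
    ultimately show ?thesis using 1 by auto
  qed simp
qed

end

type_synonym 'a m2 = "'a \<times> 'a \<times> 'a \<times> 'a"

fun lin :: "'a::comm_ring_1 m2 \<Rightarrow> 'a \<times> 'a \<Rightarrow> 'a \<times> 'a" where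
  "lin (a,b,c,d) (x,y) = (a*x+b*y, c*x+d*y)"
fun mmul :: "'a::comm_ring_1 m2 \<Rightarrow> 'a m2 \<Rightarrow> 'a m2" where
  "mmul (a,b,c,d) (e,f,g,h) = (a*e+b*g, a*f+b*h, c*e+d*g, c*f+d*h)"
fun mdet :: "'a::comm_ring_1 m2 \<Rightarrow> 'a" where
  "mdet (a,b,c,d) = a*d - b*c"
fun minv :: "'a::field m2 \<Rightarrow> 'a m2" where
  "minv (a,b,c,d) = (d/(a*d-b*c), -b/(a*d-b*c), -c/(a*d-b*c), a/(a*d-b*c))"
definition I2 :: "'a::comm_ring_1 m2" where "I2 = (1,0,0,1)"
definition sc :: "'a::comm_ring_1 \<Rightarrow> 'a m2" where "sc c = (c,0,0,c)"

lemma lin_mmul: "lin (mmul A B) u = lin A (lin B u)"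
  by (cases A; cases B; cases u) (simp add: algebra_simps)
lemma lin_comp: "lin A ` (lin B ` S) = lin (mmul A B) ` S"
  by (auto simp: lin_mmul image_iff)
lemma lin_I[simp]: "lin I2 u = u" by (cases u) (simp add: I2_def)
lemma lin_I_img[simp]: "lin I2 ` S = S" by simp
lemma mmul_assoc: "mmul (mmul A B) C = mmul A (mmul B C)"
  by (cases A; cases B; cases C) (simp add: algebra_simps)
lemma mmul_I[simp]: "mmul I2 A = A" "mmul A I2 = A"
  by (cases A; simp add: I2_def)+
lemma mdet_mmul: "mdet (mmul A B) = mdet A * mdet B"
  by (cases A; cases B) (simp add: algebra_simps)
lemma minv_r: "mdet A \<noteq> 0 \<Longrightarrow> mmul A (minv A) = I2"
proof (cases A)
  case (fields a b c d)
  assume "mdet A \<noteq> 0"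
  then have D: "a*d - b*c \<noteq> 0" using fields by simp
  define E where "E = a*d-b*c"
  have E: "E \<noteq> 0" using D E_def by simp
  have "a*(d/E) + b*(-c/E) = (a*d-b*c)/E" "a*(-b/E) + b*(a/E) = 0"
       "c*(d/E) + d*(-c/E) = 0" "c*(-b/E) + d*(a/E) = (a*d-b*c)/E"
    using E by (simp_all add: field_simps)
  then show ?thesis using fields E by (simp add: I2_def flip: E_def)
qed
lemma minv_l: "mdet A \<noteq> 0 \<Longrightarrow> mmul (minv A) A = I2"
proof (cases A)
  case (fields a b c d)
  assume "mdet A \<noteq> 0"
  then have D: "a*d - b*c \<noteq> 0" using fields by simp
  define E where "E = a*d-b*c"
  have E: "E \<noteq> 0" using D E_def by simp
  have "d/E*a + (-b/E)*c = (a*d-b*c)/E" "d/E*b + (-b/E)*d = 0"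
       "(-c/E)*a + a/E*c = 0" "(-c/E)*b + a/E*d = (a*d-b*c)/E"
    using E by (simp_all add: field_simps)
  then show ?thesis using fields E by (simp add: I2_def flip: E_def)
qed
lemma mdet_minv: "mdet A \<noteq> 0 \<Longrightarrow> mdet (minv A) = 1 / mdet A"
  using mdet_mmul[of A "minv A"] minv_r[of A] by (simp add: I2_def field_simps)
lemma mdet_I[simp]: "mdet I2 = 1" by (simp add: I2_def)
lemma mdet_sc[simp]: "mdet (sc c) = c * c" by (simp add: sc_def)
lemma lin_sc: "lin (sc c) u = (c * fst u, c * snd u)" by (cases u) (simp add: sc_def)
lemma mmul_sc_comm: "mmul (sc c) A = mmul A (sc c)"
  by (cases A) (simp add: sc_def algebra_simps)

context qpv begin

definition L0 :: "('k \<times> 'k) set" where "L0 = {u. sm 0 (fst u) \<and> sm 0 (snd u)}"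

fun intO :: "'k m2 \<Rightarrow> bool" where
  "intO (a,b,c,d) \<longleftrightarrow> sm 0 a \<and> sm 0 b \<and> sm 0 c \<and> sm 0 d"

lemma Zp_sm: "Zp v = {x. sm 0 x}" by (auto simp: Zp_def sm_def)

lemma lattice_span_lin: "lattice_span v e f = lin (fst e, fst f, snd e, snd f) ` L0"
  unfolding lattice_span_def L0_def Zp_sm
  by (cases e; cases f) (force simp: image_iff algebra_simps)

lemma scale_lin: "scale_set c L = lin (sc c) ` L"
  unfolding scale_set_def by (auto simp: lin_sc)

lemma lin_intO: assumes "intO U" "u \<in> L0" shows "lin U u \<in> L0"
proof -
  obtain a b c d where U: "U = (a,b,c,d)" by (metis prod_cases4)
  obtain x y where u: "u = (x,y)" by fastforce
  show ?thesis using assms unfolding U u by (auto simp: L0_def intro!: sm_add sm_mult'[where M=0])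
qed

lemma intO_I: "intO I2" by (simp add: I2_def sm_one)

lemma LEQ0: assumes "intO U" "intO U'" "mmul U U' = I2" shows "lin U ` L0 = L0"
proof
  show "lin U ` L0 \<subseteq> L0" using lin_intO[OF assms(1)] by blast
  show "L0 \<subseteq> lin U ` L0"
  proof
    fix u assume "u \<in> L0"
    then have "lin U' u \<in> L0" using assms lin_intO by auto
    moreover have "u = lin U (lin U' u)" using assms(3) by (simp flip: lin_mmul)
    ultimately show "u \<in> lin U ` L0" by blast
  qed
qed

lemma LEQ: assumes "A = mmul B U" "intO U" "intO U'" "mmul U U' = I2"
  shows "lin A ` L0 = lin B ` L0"
  using LEQ0[OF assms(2-4)] assms(1) by (simp flip: lin_comp)

lemma LSUB: assumes "lin A ` L0 \<subseteq> lin B ` L0" shows "\<exists>U. intO U \<and> A = mmul B U"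
proof -
  have "(1,0) \<in> L0" "(0,1) \<in> L0" by (auto simp: L0_def sm_one)
  then obtain u1 u2 where u: "u1 \<in> L0" "u2 \<in> L0" "lin A (1,0) = lin B u1" "lin A (0,1) = lin B u2"
    using assms by blast
  obtain x1 y1 x2 y2 where e: "u1 = (x1,y1)" "u2 = (x2,y2)" by fastforce
  show ?thesis
    using u e by (intro exI[of _ "(x1,x2,y1,y2)"]) (cases A; cases B; auto simp: L0_def)
qed

lemma lin_L0_sub: "S \<subseteq> T \<Longrightarrow> lin A ` S \<subseteq> lin A ` T" by auto

lemma is_lattice_iff: "is_lattice v L \<longleftrightarrow> (\<exists>B. mdet B \<noteq> 0 \<and> L = lin B ` L0)"
proof
  assume "is_lattice v L"
  then obtain e f where "fst e * snd f - snd e * fst f \<noteq> 0" "L = lattice_span v e f"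
    unfolding is_lattice_def by blast
  then show "\<exists>B. mdet B \<noteq> 0 \<and> L = lin B ` L0"
    by (intro exI[of _ "(fst e, fst f, snd e, snd f)"]) (auto simp: lattice_span_lin algebra_simps)
next
  assume "\<exists>B. mdet B \<noteq> 0 \<and> L = lin B ` L0"
  then obtain a b c d where "mdet (a,b,c,d) \<noteq> 0" "L = lin (a,b,c,d) ` L0" by (metis prod_cases4)
  then show "is_lattice v L" unfolding is_lattice_def
    by (intro exI[of _ "(a,c)"] exI[of _ "(b,d)"]) (auto simp: lattice_span_lin algebra_simps)
qed

lemma scale_scale: "scale_set c (scale_set d L) = scale_set (c*d) L"
  unfolding scale_set_def image_image by (simp add: mult.assoc)
lemma scale_one[simp]: "scale_set 1 L = L"
  unfolding scale_set_def by auto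

lemma hclass_self: "L \<in> hclass L"
  unfolding hclass_def by (auto intro: exI[of _ 1])

lemma hclass_scale: assumes "c \<noteq> 0" shows "hclass (scale_set c L) = hclass L"
proof -
  have "scale_set d (scale_set c L) \<in> hclass L" if "d \<noteq> 0" for d
    unfolding hclass_def scale_scale using that assms by auto
  moreover have "scale_set d L \<in> hclass (scale_set c L)" if "d \<noteq> 0" for d
  proof -
    have "scale_set d L = scale_set (d / c) (scale_set c L)" using assms by (simp add: scale_scale)
    then show ?thesis unfolding hclass_def using that assms by auto
  qed
  ultimately show ?thesis unfolding hclass_def by blast
qed

lemma hclass_mem: "L' \<in> hclass L \<Longrightarrow> hclass L' = hclass L"
  unfolding hclass_def using hclass_scale unfolding hclass_def by blast

lemma hclass_sc: "c \<noteq> 0 \<Longrightarrow> hclass (lin (mmul (sc c) B) ` S) = hclass (lin B ` S)"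
  using hclass_scale[of c "lin B ` S"] by (simp add: scale_lin lin_comp)

lemma vertex_act_hclass: "vertex_act (lin g) (hclass L) = hclass (lin g ` L)"
proof -
  have "lin g ` scale_set c L = scale_set c (lin g ` L)" for c
    unfolding scale_lin lin_comp by (simp add: mmul_sc_comm)
  then show ?thesis unfolding vertex_act_def hclass_def by auto
qed

lemma vertex_act_comp: "vertex_act (lin (mmul A B)) X = vertex_act (lin A) (vertex_act (lin B) X)"
proof -
  have "lin (mmul A B) = (\<lambda>x. lin A (lin B x))" by (rule ext) (simp add: lin_mmul)
  then show ?thesis unfolding vertex_act_def image_image by simp
qed

lemma vertex_act_I[simp]: "vertex_act (lin I2) X = X"
  unfolding vertex_act_def by simp

lemma vertex_act_inv: "mdet g \<noteq> 0 \<Longrightarrow> vertex_act (lin (minv g)) (vertex_act (lin g) X) = X"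
  by (simp flip: vertex_act_comp add: minv_l)
lemma vertex_act_inv': "mdet g \<noteq> 0 \<Longrightarrow> vertex_act (lin g) (vertex_act (lin (minv g)) X) = X"
  by (simp flip: vertex_act_comp add: minv_r)

lemma chamber_act_comp: "chamber_act (lin (mmul A B)) C = chamber_act (lin A) (chamber_act (lin B) C)"
  unfolding chamber_act_def by (auto simp: vertex_act_comp image_image)

end

context qpv begin

lemma sm_pi_mult: "sm 0 y \<Longrightarrow> sm 1 (pi * y)" using sm_mult[OF sm_pi, of 0 y] by simp

lemma mem_L0[simp]: "(x,y) \<in> L0 \<longleftrightarrow> sm 0 x \<and> sm 0 y" by (simp add: L0_def)

lemma mem_piL0: "(x,y) \<in> scale_set pi L0 \<longleftrightarrow> sm 1 x \<and> sm 1 y"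
proof
  assume "(x,y) \<in> scale_set pi L0"
  then obtain a b where "sm 0 a" "sm 0 b" "x = pi * a" "y = pi * b"
    unfolding scale_set_def L0_def by auto
  then show "sm 1 x \<and> sm 1 y" using sm_pi_mult by auto
next
  assume "sm 1 x \<and> sm 1 y"
  then have "sm 0 (x/pi)" "sm 0 (y/pi)" by (auto simp: sm_div_pi')
  then have "(x/pi, y/pi) \<in> L0" by simp
  moreover have "(x,y) = (\<lambda>u. (pi * fst u, pi * snd u)) (x/pi, y/pi)" by simp
  ultimately show "(x,y) \<in> scale_set pi L0" unfolding scale_set_def by (rule image_eqI[rotated])
qed

lemma mem_N: "(x,y) \<in> lin (pi,0,0,1) ` L0 \<longleftrightarrow> sm 1 x \<and> sm 0 y"
proof
  assume "(x,y) \<in> lin (pi,0,0,1) ` L0"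
  then obtain a b where "sm 0 a" "sm 0 b" "x = pi * a" "y = b" by auto
  then show "sm 1 x \<and> sm 0 y" using sm_pi_mult by auto
next
  assume "sm 1 x \<and> sm 0 y"
  then have "sm 0 (x/pi)" by (auto simp: sm_div_pi')
  moreover have "(x,y) = lin (pi,0,0,1) (x/pi, y)" by simp
  ultimately show "(x,y) \<in> lin (pi,0,0,1) ` L0" using \<open>sm 1 x \<and> sm 0 y\<close>
    by (metis image_eqI mem_L0)
qed

lemma mem_M: assumes "sm 0 t"
  shows "(x,y) \<in> lin (1,0,t,pi) ` L0 \<longleftrightarrow> sm 0 x \<and> sm 1 (y - t * x)"
proof
  assume "(x,y) \<in> lin (1,0,t,pi) ` L0"
  then obtain a b where "sm 0 a" "sm 0 b" "x = a" "y = t * a + pi * b" by auto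
  then show "sm 0 x \<and> sm 1 (y - t * x)" using sm_pi_mult by auto
next
  assume h: "sm 0 x \<and> sm 1 (y - t * x)"
  then have "sm 0 ((y - t * x)/pi)" by (auto simp: sm_div_pi')
  moreover have "(x,y) = lin (1,0,t,pi) (x, (y - t * x)/pi)" by simp
  ultimately show "(x,y) \<in> lin (1,0,t,pi) ` L0" using h
    by (metis image_eqI mem_L0)
qed

lemma cl_add: "(a,b) \<in> lin C ` L0 \<Longrightarrow> (c,d) \<in> lin C ` L0 \<Longrightarrow> (a+c, b+d) \<in> lin C ` L0"
proof -
  assume "(a,b) \<in> lin C ` L0" "(c,d) \<in> lin C ` L0"
  then obtain x y x' y' where "(x,y) \<in> L0" "(x',y') \<in> L0" "(a,b) = lin C (x,y)" "(c,d) = lin C (x',y')"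
    by auto
  moreover obtain c1 c2 c3 c4 where "C = (c1,c2,c3,c4)" by (metis prod_cases4)
  ultimately show ?thesis
    by (auto simp: image_iff algebra_simps intro!: bexI[of _ "(x+x',y+y')"] sm_add)
qed

lemma cl_smul: "sm 0 r \<Longrightarrow> (a,b) \<in> lin C ` L0 \<Longrightarrow> (r*a, r*b) \<in> lin C ` L0"
proof -
  assume r: "sm 0 r" "(a,b) \<in> lin C ` L0"
  then obtain x y where "(x,y) \<in> L0" "(a,b) = lin C (x,y)" by auto
  moreover obtain c1 c2 c3 c4 where "C = (c1,c2,c3,c4)" by (metis prod_cases4)
  ultimately show ?thesis using r
    by (auto simp: image_iff algebra_simps intro!: bexI[of _ "(r*x,r*y)"] sm_mult'[where M=0])
qed

lemma cl_diff: "(a,b) \<in> lin C ` L0 \<Longrightarrow> (c,d) \<in> lin C ` L0 \<Longrightarrow> (a-c, b-d) \<in> lin C ` L0"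
  using cl_add[of a b C "-c" "-d"] cl_smul[of "-1" c d C] sm_one by simp

lemma NEIGH:
  assumes "scale_set pi L0 \<subseteq> L" "L \<subseteq> L0" "L = lin C ` L0"
  shows "L = L0 \<or> L = scale_set pi L0 \<or> L = lin (pi,0,0,1) ` L0 \<or> (\<exists>t. sm 0 t \<and> L = lin (1,0,t,pi) ` L0)"
proof (cases "\<exists>x y. (x,y) \<in> L \<and> \<not> sm 1 x")
  case True
  then obtain x y where xy: "(x,y) \<in> L" "\<not> sm 1 x" by blast
  have x0: "sm 0 x" "sm 0 y" using xy assms(2) by auto
  have xnz: "x \<noteq> 0" using xy sm_unit_nz by blast
  have xi: "sm 0 (inverse x)" using sm_unit_inv x0 xy by blast
  define t where "t = y * inverse x"
  have t: "sm 0 t" unfolding t_def using sm_mult[OF x0(2) xi] by simp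
  have pL: "(a,b) \<in> L" if "sm 1 a" "sm 1 b" for a b using assms(1) that mem_piL0 by blast
  have sub1: "lin (1,0,t,pi) ` L0 \<subseteq> L"
  proof
    fix u assume "u \<in> lin (1,0,t,pi) ` L0"
    then obtain a b where u: "u = (a,b)" "sm 0 a" "sm 1 (b - t*a)" using mem_M[OF t] by (cases u) auto
    have "(a * inverse x * x, a * inverse x * y) \<in> L"
      using cl_smul[of "a * inverse x" x y C] xy(1) assms(3) sm_mult[OF u(2) xi] by simp
    moreover have "(a * inverse x * x, a * inverse x * y) = (a, t * a)" using xnz by (simp add: t_def)
    ultimately have "(a, t*a) \<in> L" by simp
    moreover have "(0, b - t*a) \<in> L" using pL u by simp
    ultimately have "(a + 0, t*a + (b - t*a)) \<in> L" using cl_add assms(3) by blast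
    then show "u \<in> L" using u by simp
  qed
  show ?thesis
  proof (cases "L \<subseteq> lin (1,0,t,pi) ` L0")
    case True
    then show ?thesis using sub1 t by blast
  next
    case False
    then obtain a b where ab: "(a,b) \<in> L" "(a,b) \<notin> lin (1,0,t,pi) ` L0" by auto
    have ab0: "sm 0 a" "sm 0 b" using ab assms(2) by auto
    define r where "r = b - t*a"
    have r1: "\<not> sm 1 r" using ab ab0 mem_M[OF t] r_def by auto
    have r0: "sm 0 r" unfolding r_def using ab0 t by (intro sm_diff sm_mult'[where M=0]) auto
    have "(a * inverse x * x, a * inverse x * y) \<in> L"
      using cl_smul[of "a * inverse x" x y C] xy(1) assms(3) sm_mult[OF ab0(1) xi] by simp
    moreover have "(a * inverse x * x, a * inverse x * y) = (a, t * a)" using xnz by (simp add: t_def)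
    ultimately have "(a, t*a) \<in> L" by simp
    then have "(a - a, b - t*a) \<in> L" using cl_diff ab(1) assms(3) by blast
    then have "(0, r) \<in> L" by (simp add: r_def)
    then have "(inverse r * 0, inverse r * r) \<in> L"
      using cl_smul sm_unit_inv[OF r0 r1] assms(3) by blast
    then have e2: "(0, 1) \<in> L" using sm_unit_nz[OF r1] by simp
    have "(inverse x * x, inverse x * y) \<in> L" using cl_smul xi xy(1) assms(3) by blast
    then have "(1, t) \<in> L" using xnz by (simp add: t_def mult.commute)
    moreover have "(t * 0, t * 1) \<in> L" using cl_smul t e2 assms(3) by blast
    ultimately have "(1 - t*0, t - t * 1) \<in> L" using cl_diff assms(3) by blast
    then have e1: "(1, 0) \<in> L" by simp
    have "L0 \<subseteq> L"
    proof
      fix u assume "u \<in> L0"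
      then obtain c d where u: "u = (c,d)" "sm 0 c" "sm 0 d" by (cases u) auto
      have "(c * 1, c * 0) \<in> L" "(d * 0, d * 1) \<in> L" using cl_smul e1 e2 u assms(3) by blast+
      then have "(c * 1 + d * 0, c * 0 + d * 1) \<in> L" using cl_add assms(3) by blast
      then show "u \<in> L" using u by simp
    qed
    then show ?thesis using assms(2) by blast
  qed
next
  case False
  then have allx: "sm 1 x" if "(x,y) \<in> L" for x y using that by blast
  show ?thesis
  proof (cases "\<exists>x y. (x,y) \<in> L \<and> \<not> sm 1 y")
    case True
    then obtain x y where xy: "(x,y) \<in> L" "\<not> sm 1 y" by blast
    have y0: "sm 0 y" using xy assms(2) by auto
    have ynz: "y \<noteq> 0" using xy sm_unit_nz by blast
    have yi: "sm 0 (inverse y)" using sm_unit_inv y0 xy by blast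
    have "(inverse y * x, inverse y * y) \<in> L" using cl_smul yi xy(1) assms(3) by blast
    then have "(inverse y * x, 1) \<in> L" using ynz by simp
    moreover have "(inverse y * x, 0) \<in> L" using assms(1) mem_piL0 allx[OF xy(1)] sm_mult'[OF yi, of 1 x 1]
      by (auto simp: mult.commute)
    ultimately have "(inverse y * x - inverse y * x, 1 - 0) \<in> L" using cl_diff assms(3) by blast
    then have e2: "(0,1) \<in> L" by simp
    have "lin (pi,0,0,1) ` L0 \<subseteq> L"
    proof
      fix u assume "u \<in> lin (pi,0,0,1) ` L0"
      then obtain c d where u: "u = (c,d)" "sm 1 c" "sm 0 d" using mem_N by (cases u) auto
      have "(c, 0) \<in> L" using assms(1) mem_piL0 u by auto
      moreover have "(d * 0, d * 1) \<in> L" using cl_smul e2 u assms(3) by blast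
      ultimately have "(c + d * 0, 0 + d * 1) \<in> L" using cl_add assms(3) by blast
      then show "u \<in> L" using u by simp
    qed
    moreover have "L \<subseteq> lin (pi,0,0,1) ` L0"
    proof
      fix u assume "u \<in> L"
      then obtain c d where u: "u = (c,d)" "(c,d) \<in> L" by (cases u) auto
      then show "u \<in> lin (pi,0,0,1) ` L0" using allx[OF u(2)] assms(2) mem_N by auto
    qed
    ultimately show ?thesis by blast
  next
    case False
    then have "L \<subseteq> scale_set pi L0" using allx mem_piL0 by auto
    then show ?thesis using assms(1) by blast
  qed
qed

end

context qpv begin

definition D :: "nat \<Rightarrow> 'k m2" where "D i = (pi ^ i, 0, 0, 1)"
definition Std :: "nat \<Rightarrow> ('k \<times> 'k) set set" where "Std i = hclass (lin (D i) ` L0)"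

lemma mdet_D[simp]: "mdet (D i) = pi ^ i" by (simp add: D_def)
lemma D0: "D 0 = I2" by (simp add: D_def I2_def)

lemma act_Std: "vertex_act (lin g) (Std i) = hclass (lin (mmul g (D i)) ` L0)"
  unfolding Std_def vertex_act_hclass lin_comp ..

lemma act_Std_fix: "hclass (lin (mmul g (D i)) ` L0) = hclass (lin (D i) ` L0) \<Longrightarrow> vertex_act (lin g) (Std i) = Std i"
  by (simp only: act_Std) (simp add: Std_def)

lemma hclass_eqI: "A = mmul B U \<Longrightarrow> intO U \<Longrightarrow> intO U' \<Longrightarrow> mmul U U' = I2 \<Longrightarrow>
    hclass (lin A ` L0) = hclass (lin B ` L0)"
  using LEQ by metis

lemma sm_inv_pi: "sm 1 t \<Longrightarrow> sm 0 (t / pi)" by (simp add: sm_div_pi')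

lemma adj_sym: fixes X Y :: "('k \<times> 'k) set set" assumes "is_vertex v X" "adjacent p X Y" shows "adjacent p Y X"
proof -
  obtain L L' where LL: "L \<in> X" "L' \<in> Y" "scale_set pi L \<subseteq> L'" "L' \<subseteq> L"
    using assms(2) unfolding adjacent_def by blast
  obtain L1 where X: "X = hclass L1" using assms(1) unfolding is_vertex_def by blast
  have "hclass L = X" using hclass_mem LL(1) X by blast
  then have "scale_set pi L \<in> X" using hclass_scale[of pi L] hclass_self by auto
  moreover have "scale_set pi L' \<subseteq> scale_set pi L" using LL(4) unfolding scale_set_def by auto
  ultimately show ?thesis unfolding adjacent_def using LL by blast
qed

lemma adj_act: fixes X Y :: "('k \<times> 'k) set set" assumes "adjacent p X Y" shows "adjacent p (vertex_act (lin g) X) (vertex_act (lin g) Y)"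
proof -
  obtain L L' where LL: "L \<in> X" "L' \<in> Y" "scale_set pi L \<subseteq> L'" "L' \<subseteq> L"
    using assms unfolding adjacent_def by blast
  have "lin g ` scale_set pi L = scale_set pi (lin g ` L)"
    unfolding scale_lin lin_comp by (simp add: mmul_sc_comm)
  then have "scale_set pi (lin g ` L) \<subseteq> lin g ` L'" "lin g ` L' \<subseteq> lin g ` L"
    using LL by (metis image_mono)+
  moreover have "lin g ` L \<in> vertex_act (lin g) X" "lin g ` L' \<in> vertex_act (lin g) Y"
    using LL unfolding vertex_act_def by auto
  ultimately show ?thesis unfolding adjacent_def by blast
qed

lemma vertex_lin: "is_vertex v X \<longleftrightarrow> (\<exists>B. mdet B \<noteq> 0 \<and> X = hclass (lin B ` L0))"
  unfolding is_vertex_def is_lattice_iff by blast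

lemma vertex_act_vertex: assumes "mdet g \<noteq> 0" "is_vertex v X" shows "is_vertex v (vertex_act (lin g) X)"
proof -
  obtain B where B: "mdet B \<noteq> 0" "X = hclass (lin B ` L0)" using assms vertex_lin by blast
  have "vertex_act (lin g) X = hclass (lin (mmul g B) ` L0)" unfolding B vertex_act_hclass lin_comp ..
  moreover have "mdet (mmul g B) \<noteq> 0" using B assms by (simp add: mdet_mmul)
  ultimately show ?thesis unfolding vertex_lin by blast
qed

lemma Std_vertex: "is_vertex v (Std i)"
  unfolding Std_def vertex_lin by (intro exI[of _ "D i"]) simp

lemma STEP:
  assumes Y: "is_vertex v Y" and adj: "adjacent p (Std m) Y" and ne: "Y \<noteq> Std m"
    and ne2: "m > 0 \<Longrightarrow> Y \<noteq> Std (m - 1)"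
  shows "\<exists>h. mdet h \<noteq> 0 \<and> (\<forall>i\<le>m. vertex_act (lin h) (Std i) = Std i) \<and>
             vertex_act (lin h) (Std (Suc m)) = Y"
proof -
  obtain L L' where LL: "L \<in> Std m" "L' \<in> Y" "scale_set pi L \<subseteq> L'" "L' \<subseteq> L"
    using adj unfolding adjacent_def by blast
  obtain c where c: "c \<noteq> 0" "L = scale_set c (lin (D m) ` L0)"
    using LL(1) unfolding Std_def hclass_def by blast
  define B where "B = mmul (sc c) (D m)"
  have LB: "L = lin B ` L0" unfolding c B_def scale_lin lin_comp ..
  have hL: "hclass L = Std m" using LL(1) hclass_mem unfolding Std_def by blast
  have detB: "mdet B \<noteq> 0" using c by (simp add: B_def mdet_mmul)
  obtain B1 where B1: "mdet B1 \<noteq> 0" "Y = hclass (lin B1 ` L0)" using Y vertex_lin by blast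
  have hL': "hclass L' = Y" using LL(2) hclass_mem B1 by blast
  obtain c' where c': "c' \<noteq> 0" "L' = scale_set c' (lin B1 ` L0)"
    using LL(2) B1 unfolding hclass_def by blast
  define L'' where "L'' = lin (minv B) ` L'"
  have L''C: "L'' = lin (mmul (minv B) (mmul (sc c') B1)) ` L0"
    unfolding L''_def c' scale_lin lin_comp ..
  have L'B: "L' = lin B ` L''" unfolding L''_def lin_comp using minv_r[OF detB] by simp
  have inv0: "lin (minv B) ` L = L0" unfolding LB lin_comp using minv_l[OF detB] by simp
  have inv1: "lin (minv B) ` scale_set pi L = scale_set pi L0"
  proof -
    have "lin (minv B) ` scale_set pi L = lin (mmul (mmul (minv B) B) (sc pi)) ` L0"
      unfolding LB scale_lin lin_comp by (simp add: mmul_assoc mmul_sc_comm)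
    then show ?thesis using minv_l[OF detB] by (simp add: scale_lin)
  qed
  have s1: "scale_set pi L0 \<subseteq> L''" using LL(3) inv1 unfolding L''_def by (metis image_mono)
  have s2: "L'' \<subseteq> L0" using LL(4) inv0 unfolding L''_def by (metis image_mono)
  have YL'': "Y = hclass (lin B ` L'')" using hL' L'B by simp
  have BD: "hclass (lin (mmul B A) ` L0) = hclass (lin (mmul (D m) A) ` L0)" for A
    unfolding B_def mmul_assoc using hclass_sc[OF c(1)] by simp
  from NEIGH[OF s1 s2 L''C] show ?thesis
  proof (elim disjE exE conjE)
    assume "L'' = L0"
    then have "Y = Std m" using YL'' LB hL by simp
    then show ?thesis using ne by simp
  next
    assume a: "L'' = scale_set pi L0"
    have "lin B ` L'' = scale_set pi L" unfolding a LB scale_lin lin_comp by (simp add: mmul_sc_comm)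
    then have "Y = Std m" using YL'' hL hclass_scale[of pi L] by simp
    then show ?thesis using ne by simp
  next
    assume N: "L'' = lin (pi,0,0,1) ` L0"
    have "Y = hclass (lin (mmul B (pi,0,0,1)) ` L0)" using YL'' N by (simp add: lin_comp)
    then have "Y = hclass (lin (mmul (D m) (pi,0,0,1)) ` L0)" using BD by simp
    also have "mmul (D m) (pi,0,0,1) = D (Suc m)" by (simp add: D_def)
    finally have "Y = Std (Suc m)" unfolding Std_def .
    then show ?thesis by (intro exI[of _ I2]) simp
  next
    fix t assume t: "sm 0 t" and M: "L'' = lin (1,0,t,pi) ` L0"
    have "Y = hclass (lin (mmul B (1,0,t,pi)) ` L0)" using YL'' M by (simp add: lin_comp)
    then have YM: "Y = hclass (lin (mmul (D m) (1,0,t,pi)) ` L0)" using BD by simp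
    show ?thesis
    proof (cases "m = 0")
      case m0: True
      have e0: "mmul (0,1,1,t) (D 0) = mmul (D 0) (0,1,1,t)" by (simp add: D_def)
      have i0: "intO (0::'k,1::'k,1::'k,t)" "intO (-t,1::'k,1::'k,0::'k)" "mmul (0,1,1,t) (-t,1,1,0) = I2"
        using t sm_one by (auto simp: I2_def)
      have h0: "vertex_act (lin (0,1,1,t)) (Std 0) = Std 0"
        by (rule act_Std_fix, rule hclass_eqI[OF e0 i0])
      have e1: "mmul (0,1,1,t) (D (Suc m)) = mmul (mmul (D m) (1,0,t,pi)) (0,1,1,0)" using m0 by (simp add: D_def)
      have i1: "intO (0::'k,1::'k,1::'k,0::'k)" "mmul (0::'k,1,1,0) (0,1,1,0) = I2"
        using sm_one by (auto simp: I2_def)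
      have h1: "vertex_act (lin (0,1,1,t)) (Std (Suc m)) = Y"
        unfolding act_Std YM by (rule hclass_eqI[OF e1 i1(1) i1(1) i1(2)])
      show ?thesis using h0 h1 m0 by (intro exI[of _ "(0,1,1,t)"]) auto
    next
      case False
      show ?thesis
      proof (cases "sm 1 t")
        case True
        have e: "mmul (D m) (1,0,t,pi) = mmul (mmul (sc pi) (D (m - 1))) (1,0,t/pi,1)"
          using False by (cases m) (auto simp: D_def sc_def)
        have i: "intO (1::'k,0::'k,t/pi,1::'k)" "intO (1::'k,0::'k,-(t/pi),1::'k)"
          "mmul (1,0,t/pi,1) (1,0,-(t/pi),1) = I2"
          using sm_one sm_inv_pi[OF True] by (auto simp: I2_def)
        have "Y = hclass (lin (mmul (sc pi) (D (m - 1))) ` L0)" unfolding YM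
          by (rule hclass_eqI[OF e i])
        then have "Y = Std (m - 1)" unfolding Std_def using hclass_sc[of pi] by simp
        then show ?thesis using ne2 False by simp
      next
        case ntu: False
        define s where "s = inverse t"
        have tnz: "t \<noteq> 0" using ntu sm_unit_nz by blast
        have s: "sm 0 s" unfolding s_def using sm_unit_inv t ntu by blast
        have ts: "t * s = 1" using tnz by (simp add: s_def)
        define h where "h = (1::'k, pi ^ m * s, 0::'k, 1::'k)"
        have fix_i: "vertex_act (lin h) (Std i) = Std i" if "i \<le> m" for i
        proof -
          have pw: "pi ^ m = pi ^ i * pi ^ (m - i)" using that by (simp flip: power_add)
          have e: "mmul h (D i) = mmul (D i) (1, pi^(m-i) * s, 0, 1)"
            by (simp add: h_def D_def pw)
          have i: "intO (1::'k, pi^(m-i) * s, 0::'k, 1::'k)" "intO (1::'k, -(pi^(m-i) * s), 0::'k, 1::'k)"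
            "mmul (1, pi^(m-i) * s, 0, 1) (1, -(pi^(m-i) * s), 0, 1) = I2"
            using sm_one s sm_mono[OF sm_mult[OF sm_pow s], of 0 "m - i"] by (auto simp: I2_def)
          show ?thesis by (rule act_Std_fix, rule hclass_eqI[OF e i])
        qed
        have e: "mmul h (D (Suc m)) = mmul (mmul (D m) (1,0,t,pi)) (pi, s, -t, 0)"
          using ts by (simp add: h_def D_def mult.commute)
        have i: "intO (pi, s, -t, 0)" "intO (0, -s, t, pi)" "mmul (pi, s, -t, 0) (0, -s, t, pi) = I2"
          using s t sm_mono[OF sm_pi] ts by (auto simp: I2_def mult.commute)
        have "vertex_act (lin h) (Std (Suc m)) = Y" unfolding act_Std YM by (rule hclass_eqI[OF e i])
        moreover have "mdet h \<noteq> 0" by (simp add: h_def)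
        ultimately show ?thesis using fix_i by blast
      qed
    qed
  qed
qed

definition npath :: "(nat \<Rightarrow> ('k \<times> 'k) set set) \<Rightarrow> nat \<Rightarrow> bool" where
  "npath V m \<longleftrightarrow> (\<forall>i\<le>m. is_vertex v (V i)) \<and> (\<forall>i<m. adjacent p (V i) (V (Suc i)) \<and> V i \<noteq> V (Suc i))
     \<and> (\<forall>i. Suc (Suc i) \<le> m \<longrightarrow> V i \<noteq> V (Suc (Suc i)))"

lemma PATH: "npath V m \<Longrightarrow> \<exists>g. mdet g \<noteq> 0 \<and> (\<forall>i\<le>m. vertex_act (lin g) (Std i) = V i)"
proof (induction m)
  case 0
  then obtain B where "mdet B \<noteq> 0" "V 0 = hclass (lin B ` L0)" unfolding npath_def vertex_lin by auto
  then show ?case by (intro exI[of _ B]) (simp add: act_Std D0)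
next
  case (Suc m)
  have "npath V m" using Suc.prems unfolding npath_def by auto
  then obtain g where g: "mdet g \<noteq> 0" "\<forall>i\<le>m. vertex_act (lin g) (Std i) = V i" using Suc.IH by blast
  define Y where "Y = vertex_act (lin (minv g)) (V (Suc m))"
  have gY: "vertex_act (lin g) Y = V (Suc m)" unfolding Y_def using vertex_act_inv' g by blast
  have "V m = vertex_act (lin g) (Std m)" using g(2) by simp
  then have Sm: "vertex_act (lin (minv g)) (V m) = Std m" using vertex_act_inv[OF g(1)] by simp
  have Yv: "is_vertex v Y" unfolding Y_def using Suc.prems g
    by (intro vertex_act_vertex) (auto simp: npath_def mdet_minv)
  have a1: "adjacent p (V m) (V (Suc m))" "V m \<noteq> V (Suc m)" using Suc.prems unfolding npath_def by auto
  have adj: "adjacent p (Std m) Y" using adj_act[OF a1(1), of "minv g"] Sm unfolding Y_def by simp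
  have ne: "Y \<noteq> Std m"
  proof
    assume "Y = Std m"
    then have "V (Suc m) = V m" using gY g(2) by simp
    then show False using a1(2) by simp
  qed
  have ne2: "Y \<noteq> Std (m - 1)" if "m > 0"
  proof
    assume "Y = Std (m - 1)"
    then have "V (Suc m) = V (m - 1)" using gY g by auto
    moreover have "Suc (Suc (m - 1)) \<le> Suc m" using that by simp
    moreover have "Suc (Suc (m - 1)) = Suc m" using that by simp
    ultimately show False using Suc.prems unfolding npath_def by metis
  qed
  obtain h where h: "mdet h \<noteq> 0" "\<forall>i\<le>m. vertex_act (lin h) (Std i) = Std i"
    "vertex_act (lin h) (Std (Suc m)) = Y" using STEP[OF Yv adj ne ne2] by blast
  show ?case
  proof (intro exI[of _ "mmul g h"] conjI allI impI)
    show "mdet (mmul g h) \<noteq> 0" using g h by (simp add: mdet_mmul)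
    fix i assume "i \<le> Suc m"
    then show "vertex_act (lin (mmul g h)) (Std i) = V i"
      using g h gY by (cases "i = Suc m") (auto simp: vertex_act_comp)
  qed
qed

lemma intO_det: "intO U \<Longrightarrow> sm 0 (mdet U)"
  by (cases U) (auto intro!: sm_diff sm_mult'[where M=0])

lemma LEQV_le: assumes "lin A ` L0 \<subseteq> lin B ` L0" "mdet A \<noteq> 0" "mdet B \<noteq> 0"
  shows "v (mdet B) \<le> v (mdet A)"
proof -
  obtain U where U: "intO U" "A = mmul B U" using LSUB assms(1) by blast
  have "mdet A = mdet B * mdet U" using U by (simp add: mdet_mmul)
  moreover have "mdet U \<noteq> 0" using assms U by (auto simp: mdet_mmul)
  moreover have "v (mdet U) \<ge> 0" using intO_det[OF U(1)] \<open>mdet U \<noteq> 0\<close> unfolding sm_def by auto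
  ultimately show ?thesis using assms by (simp add: v_mult)
qed

lemma LEQV: "lin A ` L0 = lin B ` L0 \<Longrightarrow> mdet A \<noteq> 0 \<Longrightarrow> mdet B \<noteq> 0 \<Longrightarrow> v (mdet A) = v (mdet B)"
  using LEQV_le by (metis order_antisym order_refl)

lemma vtype_act: assumes "mdet g \<noteq> 0"
  shows "vertex_type v (vertex_act (lin g) (Std i)) t \<longleftrightarrow> t = (v (mdet g) + int i) mod 2"
proof
  assume "vertex_type v (vertex_act (lin g) (Std i)) t"
  then obtain e f where ef: "fst e * snd f - snd e * fst f \<noteq> 0"
    "lattice_span v e f \<in> hclass (lin (mmul g (D i)) ` L0)"
    "t = v (fst e * snd f - snd e * fst f) mod 2" unfolding vertex_type_def act_Std by blast
  define E where "E = (fst e, fst f, snd e, snd f)"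
  have dE: "mdet E = fst e * snd f - snd e * fst f" by (simp add: E_def algebra_simps)
  obtain c where c: "c \<noteq> 0" "lin E ` L0 = scale_set c (lin (mmul g (D i)) ` L0)"
    using ef(2) unfolding lattice_span_lin E_def[symmetric] hclass_def by blast
  have "lin E ` L0 = lin (mmul (sc c) (mmul g (D i))) ` L0" using c(2) unfolding scale_lin lin_comp .
  then have "v (mdet E) = v (mdet (mmul (sc c) (mmul g (D i))))"
    using ef(1) dE c assms by (intro LEQV) (auto simp: mdet_mmul)
  also have "\<dots> = 2 * v c + v (mdet g) + int i" using c assms by (simp add: mdet_mmul v_mult)
  finally have "v (mdet E) = 2 * v c + (v (mdet g) + int i)" by simp
  then show "t = (v (mdet g) + int i) mod 2" using ef(3) dE by simp
next
  assume t: "t = (v (mdet g) + int i) mod 2"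
  obtain a b c d where A: "mmul g (D i) = (a,b,c,d)" by (metis prod_cases4)
  have "mdet (mmul g (D i)) = pi ^ i * mdet g" by (simp add: mdet_mmul)
  then have dA: "a*d - c*b = pi ^ i * mdet g" "a * d - c * b \<noteq> 0" using A assms by (auto simp: algebra_simps)
  have "lattice_span v (a,c) (b,d) = lin (mmul g (D i)) ` L0" unfolding lattice_span_lin A by simp
  then have "lattice_span v (a,c) (b,d) \<in> vertex_act (lin g) (Std i)" unfolding act_Std using hclass_self by simp
  moreover have "v (a * d - c * b) = v (mdet g) + int i" using dA assms by (simp add: v_mult)
  ultimately show "vertex_type v (vertex_act (lin g) (Std i)) t"
    unfolding vertex_type_def using dA t by (intro exI[of _ "(a,c)"] exI[of _ "(b,d)"]) auto
qed

end

context qpv begin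

lemma gallery_splice:
  assumes g: "gallery p v cs" and ab: "a \<le> b" "b < length cs"
    and j: "0 < a \<Longrightarrow> cs!(a-1) \<noteq> cs!b \<and> cs!(a-1) \<inter> cs!b \<noteq> {}"
  shows "gallery p v (take a cs @ drop b cs)"
proof -
  let ?c = "take a cs @ drop b cs"
  have len: "length ?c = a + (length cs - b)" using ab by simp
  have nth1: "?c ! i = cs ! i" if "i < a" for i using that ab by (simp add: nth_append)
  have nth2: "?c ! i = cs ! (i - a + b)" if "i \<ge> a" "i < length ?c" for i
    using that ab by (simp add: nth_append add.commute)
  have "?c \<noteq> []" using ab by simp
  moreover have "\<forall>C\<in>set ?c. is_chamber p v C"
    using g unfolding gallery_def by (auto dest: in_set_dropD in_set_takeD)
  moreover have "?c ! i \<noteq> ?c ! Suc i \<and> ?c ! i \<inter> ?c ! Suc i \<noteq> {}" if "Suc i < length ?c" for i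
  proof -
    consider "Suc i < a" | "Suc i = a" | "i \<ge> a" by linarith
    then show ?thesis
    proof cases
      case 1 then show ?thesis using g nth1 ab unfolding gallery_def by simp
    next
      case 2
      then have ia: "i = a - 1" "0 < a" by auto
      have "?c ! Suc i = cs ! b" using nth2[of "Suc i"] that 2 by simp
      moreover have "?c ! i = cs ! i" using nth1 ia by simp
      ultimately show ?thesis using j ia by simp
    next
      case 3
      have "Suc (i - a + b) < length cs" using that 3 len by linarith
      moreover have "Suc i - a + b = Suc (i - a + b)" using 3 by simp
      ultimately show ?thesis using g nth2[of i] nth2[of "Suc i"] that 3 unfolding gallery_def by simp
    qed
  qed
  ultimately show ?thesis unfolding gallery_def by blast
qed

lemma no_shortcut:
  assumes g: "gallery p v cs"
    and mn: "\<forall>cs'. gallery p v cs' \<and> hd cs' = hd cs \<and> last cs' = last cs \<longrightarrow> length cs \<le> length cs'"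
    and jl: "Suc j < l" "l < length cs" and sh: "cs!j = cs!l \<or> cs!j \<inter> cs!l \<noteq> {}"
  shows False
proof (cases "cs!j = cs!l")
  case True
  let ?c = "take j cs @ drop l cs"
  have "gallery p v ?c"
  proof (rule gallery_splice[OF g])
    show "j \<le> l" "l < length cs" using jl by auto
    assume "0 < j"
    have "Suc (j - 1) < length cs" using jl by simp
    then have "cs!(j-1) \<noteq> cs!(Suc (j-1)) \<and> cs!(j-1) \<inter> cs!(Suc (j-1)) \<noteq> {}"
      using g unfolding gallery_def by blast
    moreover have "Suc (j - 1) = j" using \<open>0 < j\<close> by simp
    ultimately show "cs ! (j - 1) \<noteq> cs ! l \<and> cs ! (j - 1) \<inter> cs ! l \<noteq> {}"
      using True by simp
  qed
  moreover have "hd ?c = hd cs"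
  proof (cases j)
    case 0
    have "cs \<noteq> []" using jl by auto
    then show ?thesis using True jl 0 by (simp add: hd_drop_conv_nth hd_conv_nth)
  next
    case (Suc k)
    have "cs \<noteq> []" using jl by auto
    then show ?thesis using Suc by (cases cs) auto
  qed
  moreover have "last ?c = last cs" using jl by simp
  moreover have "length ?c < length cs" using jl by simp
  ultimately show False using mn by fastforce
next
  case False
  let ?c = "take (Suc j) cs @ drop l cs"
  have "gallery p v ?c"
    by (rule gallery_splice[OF g]) (use jl sh False in auto)
  moreover have "hd ?c = hd cs" using jl by (cases cs) auto
  moreover have "last ?c = last cs" using jl by simp
  moreover have "length ?c < length cs" using jl by simp
  ultimately show False using mn by fastforce
qed

lemma chamber_two: "is_chamber p v C \<Longrightarrow> x \<in> C \<Longrightarrow> y \<in> C \<Longrightarrow> x \<noteq> y \<Longrightarrow> C = {x,y}"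
  unfolding is_chamber_def by auto

lemma chamber_other: "is_chamber p v C \<Longrightarrow> x \<in> C \<Longrightarrow> \<exists>y. y \<in> C \<and> y \<noteq> x"
  unfolding is_chamber_def by auto

lemma chamber_vertex: "is_chamber p v C \<Longrightarrow> x \<in> C \<Longrightarrow> is_vertex v x"
  unfolding is_chamber_def by auto

lemma chamber_adj: "is_chamber p v C \<Longrightarrow> C = {x,y} \<Longrightarrow> adjacent p x y"
  unfolding is_chamber_def by (auto simp: doubleton_eq_iff intro: adj_sym)

lemma GAL:
  assumes "weyl_dist p v C C' w"
  shows "\<exists>V. npath V (Suc (length w)) \<and> C = {V 0, V 1} \<and> C' = {V (length w), V (Suc (length w))}
           \<and> (w \<noteq> [] \<longrightarrow> vertex_type v (V 1) (w!0))"
proof -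
  obtain cs where cs: "gallery p v cs" "hd cs = C" "last cs = C'"
    "\<forall>cs'. gallery p v cs' \<and> hd cs' = C \<and> last cs' = C' \<longrightarrow> length cs \<le> length cs'"
    "length w + 1 = length cs"
    "\<forall>i < length w. \<exists>X. X \<in> cs ! i \<inter> cs ! Suc i \<and> vertex_type v X (w ! i)"
    using assms unfolding weyl_dist_def by blast
  define n where "n = length w"
  have len: "length cs = Suc n" using cs(5) n_def by simp
  have ch: "is_chamber p v (cs!i)" if "i \<le> n" for i using cs(1) len that unfolding gallery_def
    by (metis le_imp_less_Suc nth_mem)
  have gj: "cs!i \<noteq> cs!Suc i \<and> cs!i \<inter> cs!Suc i \<noteq> {}" if "i < n" for i
    using cs(1) len that unfolding gallery_def by simp
  have ne: "cs \<noteq> []" using len by auto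
  have C: "C = cs!0" using cs(2) ne by (simp add: hd_conv_nth)
  have C': "C' = cs!n" using cs(3) len ne by (simp add: last_conv_nth)
  have mn: "\<forall>cs'. gallery p v cs' \<and> hd cs' = hd cs \<and> last cs' = last cs \<longrightarrow> length cs \<le> length cs'"
    using cs by simp
  show ?thesis
  proof (cases "n = 0")
    case True
    obtain X Y where XY: "cs!0 = {X,Y}" "X \<noteq> Y" "is_vertex v X" "is_vertex v Y" "adjacent p X Y"
      using ch[of 0] unfolding is_chamber_def by auto
    define V where "V = (\<lambda>i::nat. if i = 0 then X else Y)"
    have np: "npath V (Suc n)" using True XY unfolding npath_def V_def by auto
    have e: "C = {V 0, V 1}" "C' = {V (length w), V (Suc (length w))}"
      using True XY C C' n_def by (simp_all add: V_def)
    have "w = []" using True n_def by simp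
    then show ?thesis using np e True n_def by blast
  next
    case False
    define Xf where "Xf i = (SOME x. x \<in> cs!i \<inter> cs!Suc i)" for i
    have Xf: "Xf i \<in> cs!i" "Xf i \<in> cs!Suc i" if "i < n" for i
      using someI_ex[of "\<lambda>x. x \<in> cs!i \<inter> cs!Suc i"] gj[OF that] unfolding Xf_def by auto
    have Xne: "Xf i \<noteq> Xf (Suc i)" if "Suc i < n" for i
    proof
      assume "Xf i = Xf (Suc i)"
      then have "cs!i \<inter> cs!(Suc (Suc i)) \<noteq> {}" using Xf[of i] Xf[of "Suc i"] that by auto
      then show False using no_shortcut[OF cs(1) mn, of i "Suc (Suc i)"] that len by auto
    qed
    define V0 where "V0 = (SOME y. y \<in> cs!0 \<and> y \<noteq> Xf 0)"
    define VL where "VL = (SOME y. y \<in> cs!n \<and> y \<noteq> Xf (n - 1))"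
    have ch0: "is_chamber p v (cs!0)" "is_chamber p v (cs!n)" using ch by auto
    have X0: "Xf 0 \<in> cs!0" using Xf False by simp
    have Xn: "Xf (n - 1) \<in> cs!n" using Xf(2)[of "n - 1"] False by simp
    have V0: "V0 \<in> cs!0" "V0 \<noteq> Xf 0"
      using someI_ex[OF chamber_other[OF ch0(1) X0]] unfolding V0_def by auto
    have VL: "VL \<in> cs!n" "VL \<noteq> Xf (n - 1)"
      using someI_ex[OF chamber_other[OF ch0(2) Xn]] unfolding VL_def by auto
    define V where "V i = (if i = 0 then V0 else if i \<le> n then Xf (i - 1) else VL)" for i
    have CS: "cs!i = {V i, V (Suc i)} \<and> V i \<noteq> V (Suc i)" if iln: "i \<le> n" for i
    proof -
      consider "i = 0" | "0 < i" "i < n" | "i = n" by (cases "i = 0"; cases "i = n") (use iln in auto)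
      then show ?thesis
      proof cases
        case 1 then show ?thesis using V0 Xf[of 0] False chamber_two[OF ch[of 0]] unfolding V_def by auto
      next
        case 2
        have "V i = Xf (i - 1)" "V (Suc i) = Xf i" using 2 unfolding V_def by auto
        moreover have "Xf (i - 1) \<noteq> Xf i" using Xne[of "i - 1"] 2 by simp
        moreover have "Xf (i - 1) \<in> cs!i" using Xf(2)[of "i - 1"] 2 by simp
        ultimately show ?thesis using Xf[of i] 2 chamber_two[OF ch[of i]] by auto
      next
        case 3
        have "V i = Xf (n - 1)" "V (Suc i) = VL" using 3 False unfolding V_def by auto
        moreover have "Xf (n - 1) \<in> cs!n" using Xf(2)[of "n - 1"] False by simp
        ultimately show ?thesis using VL 3 chamber_two[OF ch[of n]] by auto
      qed
    qed
    have np: "npath V (Suc n)" unfolding npath_def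
    proof (intro conjI allI impI)
      fix i assume "i \<le> Suc n"
      then show "is_vertex v (V i)"
        using CS[of i] CS[of n] chamber_vertex ch by (cases "i \<le> n") (auto simp: le_Suc_eq)
    next
      fix i assume "i < Suc n"
      then have "i \<le> n" by simp
      then have "is_chamber p v (cs!i)" "cs!i = {V i, V (Suc i)}" "V i \<noteq> V (Suc i)"
        using CS[of i] ch[of i] by blast+
      then show "adjacent p (V i) (V (Suc i))"
        using chamber_adj by blast
    next
      fix i assume "i < Suc n"
      then show "V i \<noteq> V (Suc i)" using CS[of i] by simp
    next
      fix i assume i: "Suc (Suc i) \<le> Suc n"
      show "V i \<noteq> V (Suc (Suc i))"
      proof
        assume "V i = V (Suc (Suc i))"
        then have "cs!i = cs!Suc i" using CS[of i] CS[of "Suc i"] i by (auto simp: insert_commute)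
        then show False using gj[of i] i by simp
      qed
    qed
    have ty: "vertex_type v (V 1) (w!0)" if wne: "w \<noteq> []"
    proof -
      obtain X where X: "X \<in> cs!0 \<inter> cs!Suc 0" "vertex_type v X (w!0)" using cs(6) wne by auto
      have "Suc (Suc 0) \<le> Suc n" using False by simp
      then have "V 0 \<noteq> V (Suc (Suc 0))" using np unfolding npath_def by blast
      moreover have "cs!0 = {V 0, V 1}" "V 0 \<noteq> V 1" using CS[of 0] by auto
      moreover have "cs!1 = {V 1, V (Suc (Suc 0))}" using CS[of 1] False by (simp add: numeral_2_eq_2)
      ultimately have "X = V 1" using X(1) by auto
      then show ?thesis using X by simp
    qed
    have "C = {V 0, V 1}" using CS[of 0] C by simp
    moreover have "C' = {V (length w), V (Suc (length w))}" using CS[of n] C' n_def by simp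
    ultimately show ?thesis using np ty n_def by blast
  qed
qed

end

context qpv begin

lemma chamber_act_pair: "chamber_act f {X, Y} = {vertex_act f X, vertex_act f Y}"
  unfolding chamber_act_def by simp

lemma ADJUST:
  assumes dV: "mdet gV \<noteq> 0" and dU: "mdet gU \<noteq> 0" and par: "v (mdet gV) mod 2 = v (mdet gU) mod 2"
  shows "\<exists>h. mdet h = 1 \<and> (\<forall>i. vertex_act (lin h) (vertex_act (lin gV) (Std i)) = vertex_act (lin gU) (Std i))"
proof -
  define d where "d = mdet gV / mdet gU"
  have dnz: "d \<noteq> 0" using dV dU by (simp add: d_def)
  have vd: "v d = v (mdet gV) - v (mdet gU)" using dV dU by (simp add: d_def v_divide)
  then obtain j where j: "v d = 2 * j" using par by (metis dvd_def mod_eq_dvd_iff)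
  obtain l where l: "l \<noteq> 0" "v l = j" using exists_val by blast
  define c where "c = d / (l * l)"
  have cnz: "c \<noteq> 0" using dnz l by (simp add: c_def)
  have vc: "v c = 0" using dnz l j by (simp add: c_def v_divide v_mult)
  have c0: "sm 0 c" "sm 0 (1/c)" using vc cnz by (auto simp: sm_def v_divide)
  define T where "T = (l, 0::'k, 0::'k, l * c)"
  have Tfix: "vertex_act (lin T) (Std i) = Std i" for i
  proof (rule act_Std_fix)
    have e: "mmul T (D i) = mmul (sc l) (mmul (D i) (1,0,0,c))" by (simp add: T_def D_def sc_def)
    have "hclass (lin (mmul (D i) (1,0,0,c)) ` L0) = hclass (lin (D i) ` L0)"
      by (rule hclass_eqI[of _ _ _ "(1,0,0,1/c)"]) (use c0 cnz sm_one in \<open>auto simp: I2_def\<close>)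
    then show "hclass (lin (mmul T (D i)) ` L0) = hclass (lin (D i) ` L0)"
      unfolding e using hclass_sc[OF l(1)] by simp
  qed
  define h where "h = mmul gU (mmul T (minv gV))"
  have "mdet h = mdet gU * (l * (l * c)) * (1 / mdet gV)"
    unfolding h_def using dV by (simp add: mdet_mmul mdet_minv T_def)
  also have "\<dots> = 1" using dV dU l by (simp add: c_def d_def)
  finally have dh: "mdet h = 1" .
  have "vertex_act (lin h) (vertex_act (lin gV) (Std i)) = vertex_act (lin gU) (Std i)" for i
  proof -
    have "vertex_act (lin h) (vertex_act (lin gV) (Std i)) =
        vertex_act (lin gU) (vertex_act (lin T) (vertex_act (lin (minv gV)) (vertex_act (lin gV) (Std i))))"
      unfolding h_def vertex_act_comp ..
    then show ?thesis using vertex_act_inv[OF dV] Tfix by simp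
  qed
  then show ?thesis using dh by blast
qed

lemma act_Std_to: "hclass (lin (mmul g (D i)) ` L0) = hclass (lin (D j) ` L0) \<Longrightarrow> vertex_act (lin g) (Std i) = Std j"
  by (simp only: act_Std) (simp add: Std_def)

definition J :: "'k m2" where "J = (0, pi, 1, 0)"

lemma J01: "vertex_act (lin J) (Std 0) = Std 1" "vertex_act (lin J) (Std 1) = Std 0"
proof -
  have e: "mmul J (D 0) = mmul (D 1) (0,1,1,0)" by (simp add: J_def D_def)
  have i: "intO (0::'k,1::'k,1::'k,0::'k)" "mmul (0::'k,1,1,0) (0,1,1,0) = I2"
    using sm_one by (auto simp: I2_def)
  show "vertex_act (lin J) (Std 0) = Std 1"
    by (rule act_Std_to, rule hclass_eqI[OF e i(1) i(1) i(2)])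
  have e2: "mmul J (D 1) = mmul (sc pi) (mmul (D 0) (0,1,1,0))" by (simp add: J_def D_def sc_def)
  have "hclass (lin (mmul (D 0) (0,1,1,0)) ` L0) = hclass (lin (D 0) ` L0)"
    by (rule hclass_eqI[OF refl i(1) i(1) i(2)])
  then have "hclass (lin (mmul J (D 1)) ` L0) = hclass (lin (D 0) ` L0)"
    unfolding e2 using hclass_sc[of pi] by simp
  then show "vertex_act (lin J) (Std 1) = Std 0" by (rule act_Std_to)
qed

lemma mdet_J: "mdet J = - pi" by (simp add: J_def)

lemma GPTRANS:
  assumes w1: "weyl_dist p v C1 C1' w" and w2: "weyl_dist p v C2 C2' w"
  shows "\<exists>h. mdet h = 1 \<and> chamber_act (lin h) C1 = C2 \<and> chamber_act (lin h) C1' = C2'"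
proof -
  obtain V where V: "npath V (Suc (length w))" "C1 = {V 0, V 1}" "C1' = {V (length w), V (Suc (length w))}"
    "w \<noteq> [] \<longrightarrow> vertex_type v (V 1) (w!0)" using GAL[OF w1] by blast
  obtain U where U: "npath U (Suc (length w))" "C2 = {U 0, U 1}" "C2' = {U (length w), U (Suc (length w))}"
    "w \<noteq> [] \<longrightarrow> vertex_type v (U 1) (w!0)" using GAL[OF w2] by blast
  obtain gV where gV: "mdet gV \<noteq> 0" "\<forall>i\<le>Suc (length w). vertex_act (lin gV) (Std i) = V i"
    using PATH[OF V(1)] by blast
  obtain gU where gU: "mdet gU \<noteq> 0" "\<forall>i\<le>Suc (length w). vertex_act (lin gU) (Std i) = U i"
    using PATH[OF U(1)] by blast
  have same: ?thesis if par: "v (mdet gV) mod 2 = v (mdet gU) mod 2"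
  proof -
    obtain h where h: "mdet h = 1" "\<forall>i. vertex_act (lin h) (vertex_act (lin gV) (Std i)) = vertex_act (lin gU) (Std i)"
      using ADJUST[OF gV(1) gU(1) par] by blast
    have "vertex_act (lin h) (V i) = U i" if "i \<le> Suc (length w)" for i
      using h(2) gV(2) gU(2) that by metis
    then show ?thesis using h(1) V(2,3) U(2,3) by (intro exI[of _ h]) (simp add: chamber_act_pair)
  qed
  show ?thesis
  proof (cases "w = []")
    case False
    have "vertex_type v (vertex_act (lin gV) (Std 1)) (w!0)" "vertex_type v (vertex_act (lin gU) (Std 1)) (w!0)"
      using V(4) U(4) gV(2) gU(2) False by auto
    then have "w!0 = (v (mdet gV) + 1) mod 2" "w!0 = (v (mdet gU) + 1) mod 2"
      using vtype_act gV(1) gU(1) by auto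
    then have "v (mdet gV) mod 2 = v (mdet gU) mod 2" by presburger
    then show ?thesis using same by blast
  next
    case True
    show ?thesis
    proof (cases "v (mdet gV) mod 2 = v (mdet gU) mod 2")
      case True then show ?thesis using same by blast
    next
      case False
      define gU' where "gU' = mmul gU J"
      have d': "mdet gU' \<noteq> 0" using gU(1) by (simp add: gU'_def mdet_mmul mdet_J)
      have "v (mdet gU') = v (mdet gU) + 1" using gU(1) by (simp add: gU'_def mdet_mmul mdet_J v_mult)
      then have par: "v (mdet gV) mod 2 = v (mdet gU') mod 2" using False by presburger
      obtain h where h: "mdet h = 1" "\<forall>i. vertex_act (lin h) (vertex_act (lin gV) (Std i)) = vertex_act (lin gU') (Std i)"
        using ADJUST[OF gV(1) d' par] by blast
      have "vertex_act (lin gU') (Std 0) = U 1" "vertex_act (lin gU') (Std 1) = U 0"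
        using gU(2) J01 by (auto simp: gU'_def vertex_act_comp)
      moreover have "vertex_act (lin gV) (Std 0) = V 0" "vertex_act (lin gV) (Std 1) = V 1" using gV(2) by auto
      ultimately have "vertex_act (lin h) (V 0) = U 1" "vertex_act (lin h) (V 1) = U 0" using h(2) by metis+
      then have "chamber_act (lin h) C1 = C2" using V(2) U(2) by (simp add: chamber_act_pair insert_commute)
      moreover have "C1' = C1" "C2' = C2" using V(2,3) U(2,3) \<open>w = []\<close> by auto
      ultimately show ?thesis using h(1) by metis
    qed
  qed
qed

end

fun madd :: "'a::comm_ring_1 m2 \<Rightarrow> 'a m2 \<Rightarrow> 'a m2" where
  "madd (a,b,c,d) (e,f,g,h) = (a+e, b+f, c+g, d+h)"

lemma mmul_madd_l: "mmul (madd A B) C = madd (mmul A C) (mmul B C)"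
  by (cases A; cases B; cases C) (simp add: algebra_simps)
lemma mmul_madd_r: "mmul A (madd B C) = madd (mmul A B) (mmul A C)"
  by (cases A; cases B; cases C) (simp add: algebra_simps)

context qpv begin

fun bnd :: "int \<Rightarrow> 'k m2 \<Rightarrow> bool" where
  "bnd K (a,b,c,d) \<longleftrightarrow> sm K a \<and> sm K b \<and> sm K c \<and> sm K d"

lemma bnd_mmul: "bnd K A \<Longrightarrow> bnd L B \<Longrightarrow> bnd (K + L) (mmul A B)"
  by (cases A; cases B) (auto intro!: sm_add sm_mult)

lemma bnd_mono: "bnd K A \<Longrightarrow> L \<le> K \<Longrightarrow> bnd L A"
  by (cases A) (auto intro: sm_mono)

lemma bnd_ex: "\<exists>K\<le>0. bnd K A"
proof -
  obtain a b c d where A: "A = (a,b,c,d)" by (metis prod_cases4)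
  obtain K1 K2 K3 K4 where "K1 \<le> 0" "sm K1 a" "K2 \<le> 0" "sm K2 b" "K3 \<le> 0" "sm K3 c" "K4 \<le> 0" "sm K4 d"
    using sm_ex_le by metis
  then show ?thesis unfolding A
    by (intro exI[of _ "min (min K1 K2) (min K3 K4)"]) (auto intro: sm_mono)
qed

lemma intO_bnd: "intO A \<longleftrightarrow> bnd 0 A" by (cases A) simp

lemma intO_I_plus: "bnd 0 W \<Longrightarrow> intO (madd I2 W)"
  by (cases W) (auto simp: I2_def intro!: sm_add sm_one)

fun near :: "int \<Rightarrow> 'k m2 \<Rightarrow> bool" where
  "near N (a,b,c,d) \<longleftrightarrow> sm N (a - 1) \<and> sm N b \<and> sm N c \<and> sm N (d - 1)"

fun mres :: "'k m2 \<Rightarrow> 'k m2" where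
  "mres (a,b,c,d) = (a - 1, b, c, d - 1)"

lemma near_bnd: "near N E \<longleftrightarrow> bnd N (mres E)" by (cases E) simp
lemma madd_mres: "E = madd I2 (mres E)" by (cases E) (simp add: I2_def)
lemma near_mono: "near N E \<Longrightarrow> M \<le> N \<Longrightarrow> near M E" by (cases E) (auto intro: sm_mono)

lemma FIX:
  assumes "is_vertex v X"
  shows "\<exists>N. \<forall>E. mdet E = 1 \<and> near N E \<longrightarrow> vertex_act (lin E) X = X"
proof -
  obtain B where B: "mdet B \<noteq> 0" "X = hclass (lin B ` L0)" using assms vertex_lin by blast
  define Bi where "Bi = minv B"
  obtain K1 where K1: "K1 \<le> 0" "bnd K1 B" using bnd_ex by blast
  obtain K2 where K2: "K2 \<le> 0" "bnd K2 Bi" using bnd_ex by blast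
  define N where "N = - K1 - K2"
  have "vertex_act (lin E) X = X" if E: "mdet E = 1" "near N E" for E
  proof -
    obtain e1 e2 e3 e4 where Ee: "E = (e1,e2,e3,e4)" by (metis prod_cases4)
    define Ei where "Ei = (e4, -e2, -e3, e1)"
    have EEi: "mmul E Ei = I2" using E(1) Ee by (simp add: Ei_def I2_def algebra_simps)
    have nEi: "near N Ei" using E(2) Ee by (simp add: Ei_def)
    define U where "U = mmul Bi (mmul E B)"
    define U' where "U' = mmul Bi (mmul Ei B)"
    have BBi: "mmul B Bi = I2" "mmul Bi B = I2" using minv_r[OF B(1)] minv_l[OF B(1)] unfolding Bi_def by blast+
    have iU: "intO (mmul Bi (mmul E' B))" if "near N E'" for E'
    proof -
      have "mmul Bi (mmul E' B) = madd I2 (mmul Bi (mmul (mres E') B))"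
        by (subst madd_mres[of E']) (simp add: mmul_madd_l mmul_madd_r BBi)
      moreover have "bnd 0 (mmul Bi (mmul (mres E') B))"
      proof -
        have "bnd (K2 + (N + K1)) (mmul Bi (mmul (mres E') B))"
          using that K1 K2 by (intro bnd_mmul) (auto simp: near_bnd)
        then show ?thesis by (simp add: N_def)
      qed
      ultimately show ?thesis using intO_I_plus by simp
    qed
    have UU': "mmul U U' = I2"
      unfolding U_def U'_def by (simp add: mmul_assoc BBi) (simp flip: mmul_assoc add: EEi BBi)
    have "mmul E B = mmul B U" unfolding U_def by (simp flip: mmul_assoc add: BBi)
    then have "hclass (lin (mmul E B) ` L0) = hclass (lin B ` L0)"
      by (rule hclass_eqI[OF _ iU[OF E(2), folded U_def] iU[OF nEi, folded U'_def] UU'])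
    then show ?thesis unfolding B(2) vertex_act_hclass lin_comp .
  qed
  then show ?thesis by blast
qed

end

fun p1 :: "'a m2 \<Rightarrow> 'a" where "p1 (a,b,c,d) = a"
fun p2 :: "'a m2 \<Rightarrow> 'a" where "p2 (a,b,c,d) = b"
fun p3 :: "'a m2 \<Rightarrow> 'a" where "p3 (a,b,c,d) = c"
fun p4 :: "'a m2 \<Rightarrow> 'a" where "p4 (a,b,c,d) = d"

context qpv begin

fun close :: "int \<Rightarrow> 'k m2 \<Rightarrow> 'k m2 \<Rightarrow> bool" where
  "close M (a,b,c,d) (a',b',c',d') \<longleftrightarrow> sm M (a - a') \<and> sm M (b - b') \<and> sm M (c - c') \<and> sm M (d - d')"

lemma close_mono: "close M q z \<Longrightarrow> M' \<le> M \<Longrightarrow> close M' q z"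
  by (cases q; cases z) (auto intro: sm_mono)

definition cont :: "('k m2 \<Rightarrow> 'k) \<Rightarrow> 'k m2 \<Rightarrow> bool" where
  "cont F z \<longleftrightarrow> (\<forall>N. \<exists>M. \<forall>q. close M q z \<longrightarrow> sm N (F q - F z))"

lemma cont_const: "cont (\<lambda>q. c) z" unfolding cont_def by simp

lemma cont_p: "cont p1 z" "cont p2 z" "cont p3 z" "cont p4 z"
  unfolding cont_def by (cases z; force)+

lemma cont_add: assumes "cont F z" "cont G z" shows "cont (\<lambda>q. F q + G q) z"
  unfolding cont_def
proof
  fix N
  obtain M1 where M1: "\<forall>q. close M1 q z \<longrightarrow> sm N (F q - F z)" using assms(1) unfolding cont_def by blast
  obtain M2 where M2: "\<forall>q. close M2 q z \<longrightarrow> sm N (G q - G z)" using assms(2) unfolding cont_def by blast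
  have "sm N (F q + G q - (F z + G z))" if "close (max M1 M2) q z" for q
  proof -
    have "sm N (F q - F z + (G q - G z))" using M1 M2 that close_mono by (meson max.cobounded1 max.cobounded2 sm_add)
    then show ?thesis by (simp add: algebra_simps)
  qed
  then show "\<exists>M. \<forall>q. close M q z \<longrightarrow> sm N (F q + G q - (F z + G z))" by blast
qed

lemma cont_uminus: assumes "cont F z" shows "cont (\<lambda>q. - F q) z"
  using assms unfolding cont_def by (metis minus_diff_eq minus_diff_minus sm_uminus_iff)

lemma cont_diff: assumes "cont F z" "cont G z" shows "cont (\<lambda>q. F q - G q) z"
  using cont_add[OF assms(1) cont_uminus[OF assms(2)]] by simp

lemma cont_mult: assumes "cont F z" "cont G z" shows "cont (\<lambda>q. F q * G q) z"
  unfolding cont_def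
proof
  fix N
  obtain K1 where K1: "K1 \<le> 0" "sm K1 (F z)" using sm_ex_le by blast
  obtain K2 where K2: "K2 \<le> 0" "sm K2 (G z)" using sm_ex_le by blast
  define K where "K = min K1 K2"
  have K: "K \<le> 0" "sm K (F z)" "sm K (G z)" using K1 K2 unfolding K_def by (auto intro: sm_mono)
  define T where "T = max N 0 - K"
  obtain M1 where M1: "\<forall>q. close M1 q z \<longrightarrow> sm T (F q - F z)" using assms(1) unfolding cont_def by blast
  obtain M2 where M2: "\<forall>q. close M2 q z \<longrightarrow> sm T (G q - G z)" using assms(2) unfolding cont_def by blast
  have "sm N (F q * G q - F z * G z)" if "close (max M1 M2) q z" for q
  proof -
    have f: "sm T (F q - F z)" "sm T (G q - G z)" using M1 M2 that close_mono by (meson max.cobounded1 max.cobounded2)+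
    have "sm K (F q - F z)" using f(1) K(1) T_def by (auto intro: sm_mono)
    then have Fq: "sm K (F q)" using sm_add[OF K(2)] by fastforce
    have "sm (K + T) (F q * (G q - G z))" using sm_mult[OF Fq f(2)] .
    moreover have "sm (T + K) ((F q - F z) * G z)" using sm_mult[OF f(1) K(3)] .
    ultimately have "sm (max N 0) (F q * (G q - G z) + (F q - F z) * G z)"
      unfolding T_def by (intro sm_add) (auto simp: algebra_simps)
    then show ?thesis by (auto simp: algebra_simps intro: sm_mono)
  qed
  then show "\<exists>M. \<forall>q. close M q z \<longrightarrow> sm N (F q * G q - F z * G z)" by blast
qed

lemma cont_inverse: assumes "cont F z" "F z \<noteq> 0" shows "cont (\<lambda>q. inverse (F q)) z"
  unfolding cont_def
proof
  fix N
  define a where "a = v (F z)"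
  define T where "T = max (N + 2 * a) (a + 1)"
  obtain M where M: "\<forall>q. close M q z \<longrightarrow> sm T (F q - F z)" using assms(1) unfolding cont_def by blast
  have "sm N (inverse (F q) - inverse (F z))" if "close M q z" for q
  proof -
    have f: "sm T (F q - F z)" using M that by blast
    then have "sm (v (F z) + 1) (F q - F z)" by (rule sm_mono) (simp add: T_def a_def)
    then have Fq: "F q \<noteq> 0" "v (F q) = a" using v_close[OF assms(2)] unfolding a_def by blast+
    have "inverse (F q) - inverse (F z) = (F z - F q) * inverse (F q) * inverse (F z)"
      using Fq assms(2) by (simp add: field_simps)
    moreover have "sm (T + - a + - a) ((F z - F q) * inverse (F q) * inverse (F z))"
    proof -
      have "F z - F q = - (F q - F z)" by simp
      then have f': "sm T (F z - F q)" using f sm_uminus_iff by metis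
      have i1: "sm (-a) (inverse (F q))" using sm_inverse[OF Fq(1)] Fq(2) by simp
      have i2: "sm (-a) (inverse (F z))" using sm_inverse[OF assms(2)] a_def by simp
      show ?thesis using sm_mult[OF sm_mult[OF f' i1] i2] .
    qed
    ultimately show ?thesis by (auto intro: sm_mono simp: T_def)
  qed
  then show "\<exists>M. \<forall>q. close M q z \<longrightarrow> sm N (inverse (F q) - inverse (F z))" by blast
qed

lemma dense4: "\<exists>q::rat m2. close M (map_prod of_rat (map_prod of_rat (map_prod of_rat of_rat)) q) z"
proof -
  obtain a b c d where z: "z = (a,b,c,d)" by (metis prod_cases4)
  obtain q1 q2 q3 q4 where "sm M (of_rat q1 - a)" "sm M (of_rat q2 - b)" "sm M (of_rat q3 - c)" "sm M (of_rat q4 - d)"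
    using v_dense by metis
  then show ?thesis unfolding z by (intro exI[of _ "(q1,q2,q3,q4)"]) simp
qed

end

fun vo :: "rat m2 \<Rightarrow> 'k::field_char_0 m2" where
  "vo (a,b,c,d) = (of_rat a, of_rat b, of_rat c, of_rat d)"

fun phiQ :: "rat \<Rightarrow> rat \<Rightarrow> rat m2 \<Rightarrow> rat m2" where
  "phiQ \<alpha> \<beta> (x1,x2,x3,x4) =
    ((x1*x1 + \<alpha>*(x2*x2) + \<beta>*(x3*x3) - \<alpha>*\<beta>*(x4*x4)) / qnorm \<alpha> \<beta> (x1,x2,x3,x4),
     2*x1*x2 / qnorm \<alpha> \<beta> (x1,x2,x3,x4), 2*x1*x3 / qnorm \<alpha> \<beta> (x1,x2,x3,x4),
     2*x1*x4 / qnorm \<alpha> \<beta> (x1,x2,x3,x4))"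

lemma qnorm_phiQ: assumes "qnorm \<alpha> \<beta> x \<noteq> 0" shows "qnorm \<alpha> \<beta> (phiQ \<alpha> \<beta> x) = 1"
proof -
  obtain x1 x2 x3 x4 where x: "x = (x1,x2,x3,x4)" by (metis prod_cases4)
  define n where "n = x1*x1 - \<alpha>*(x2*x2) - \<beta>*(x3*x3) + \<alpha>*\<beta>*(x4*x4)"
  have qn: "qnorm \<alpha> \<beta> x = n" unfolding x n_def by (simp add: power2_eq_square)
  have nz: "n \<noteq> 0" using assms qn by simp
  define P where "P = x1*x1 + \<alpha>*(x2*x2) + \<beta>*(x3*x3) - \<alpha>*\<beta>*(x4*x4)"
  have ph: "phiQ \<alpha> \<beta> x = (P/n, 2*x1*x2/n, 2*x1*x3/n, 2*x1*x4/n)"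
    using qn unfolding x P_def by (simp del: qnorm.simps)
  have "qnorm \<alpha> \<beta> (phiQ \<alpha> \<beta> x) = (P*P - \<alpha>*((2*x1*x2)*(2*x1*x2)) - \<beta>*((2*x1*x3)*(2*x1*x3)) + \<alpha>*\<beta>*((2*x1*x4)*(2*x1*x4))) / (n*n)"
    unfolding ph using nz by (simp add: power2_eq_square field_simps)
  also have "P*P - \<alpha>*((2*x1*x2)*(2*x1*x2)) - \<beta>*((2*x1*x3)*(2*x1*x3)) + \<alpha>*\<beta>*((2*x1*x4)*(2*x1*x4)) = n*n"
    unfolding P_def n_def by algebra
  also have "(n*n) / (n*n) = 1" using nz by simp
  finally show ?thesis .
qed

locale qpq = qpv p v for p :: nat and v :: "'k::field_char_0 \<Rightarrow> int" +
  fixes \<alpha> \<beta> :: rat and s :: 'k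
  assumes s2: "s * s = of_rat \<alpha>" and anz: "\<alpha> \<noteq> 0" and bnz: "\<beta> \<noteq> 0"
begin

abbreviation A :: 'k where "A \<equiv> of_rat \<alpha>"
abbreviation Bq :: 'k where "Bq \<equiv> of_rat \<beta>"

definition Nk :: "'k m2 \<Rightarrow> 'k" where
  "Nk w = p1 w * p1 w - A * (p2 w * p2 w) - Bq * (p3 w * p3 w) + A * Bq * (p4 w * p4 w)"
definition P1 :: "'k m2 \<Rightarrow> 'k" where
  "P1 w = p1 w * p1 w + A * (p2 w * p2 w) + Bq * (p3 w * p3 w) - A * Bq * (p4 w * p4 w)"
definition phi1 where "phi1 w = P1 w * inverse (Nk w)"
definition phi2 where "phi2 w = 2 * p1 w * p2 w * inverse (Nk w)"
definition phi3 where "phi3 w = 2 * p1 w * p3 w * inverse (Nk w)"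
definition phi4 where "phi4 w = 2 * p1 w * p4 w * inverse (Nk w)"

lemma qnorm_vo: "of_rat (qnorm \<alpha> \<beta> x) = Nk (vo x)"
  by (cases x) (simp add: Nk_def power2_eq_square of_rat_add of_rat_diff of_rat_mult)

lemma vo_phiQ: "vo (phiQ \<alpha> \<beta> x) = (phi1 (vo x), phi2 (vo x), phi3 (vo x), phi4 (vo x))"
proof -
  obtain x1 x2 x3 x4 where x: "x = (x1,x2,x3,x4)" by (metis prod_cases4)
  have n: "of_rat (qnorm \<alpha> \<beta> x) = Nk (vo x)" by (rule qnorm_vo)
  show ?thesis using n unfolding x
    by (simp add: phi1_def phi2_def phi3_def phi4_def P1_def of_rat_add of_rat_diff of_rat_mult
        of_rat_divide divide_inverse of_rat_inverse del: qnorm.simps)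
qed

lemma cont_Nk: "cont Nk z" unfolding Nk_def[abs_def]
  by (intro cont_add cont_diff cont_mult cont_const cont_p)
lemma cont_phi: "Nk z \<noteq> 0 \<Longrightarrow> cont phi1 z \<and> cont phi2 z \<and> cont phi3 z \<and> cont phi4 z"
  unfolding phi1_def[abs_def] phi2_def[abs_def] phi3_def[abs_def] phi4_def[abs_def] P1_def
  by (intro conjI cont_add cont_diff cont_mult cont_const cont_p cont_inverse cont_Nk) auto

lemma dense_vo: "\<exists>q. close M (vo q) z"
proof -
  obtain q where "close M (map_prod of_rat (map_prod of_rat (map_prod of_rat of_rat)) q) z"
    using dense4 by blast
  then show ?thesis by (intro exI[of _ q]) (cases q, simp)
qed

lemma CAY:
  assumes y: "Nk y = 1" "p1 y \<noteq> -1"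
  shows "\<exists>x. qnorm \<alpha> \<beta> x = 1 \<and> close N (vo x) y"
proof -
  obtain y1 y2 y3 y4 where ye: "y = (y1,y2,y3,y4)" by (metis prod_cases4)
  define z where "z = (1 + y1, y2, y3, y4)"
  have n1: "y1*y1 - A*(y2*y2) - Bq*(y3*y3) + A*Bq*(y4*y4) = 1" using y ye by (simp add: Nk_def)
  have Nz: "Nk z = 2 * (1 + y1)" using n1 unfolding z_def Nk_def by (simp add: algebra_simps)
  have y1: "1 + y1 \<noteq> 0" using y ye by (auto simp: add_eq_0_iff)
  have Nz0: "Nk z \<noteq> 0" by (metis Nz mult_eq_0_iff zero_neq_numeral y1)
  have y1': "(2::'k) + y1 * 2 \<noteq> 0" "(2::'k) + 2 * y1 \<noteq> 0" "2 * (1 + y1) \<noteq> 0"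
    using Nz Nz0 by (auto simp: algebra_simps)
  have ph: "phi1 z = y1" "phi2 z = y2" "phi3 z = y3" "phi4 z = y4"
  proof -
    have "P1 z = 2 * y1 * (1 + y1)" using n1 unfolding z_def P1_def by (simp add: algebra_simps)
    then show "phi1 z = y1" using Nz y1 y1' by (simp add: phi1_def field_simps)
  qed (use Nz y1 y1' in \<open>simp_all add: phi2_def phi3_def phi4_def z_def field_simps\<close>)
  have cts: "cont phi1 z" "cont phi2 z" "cont phi3 z" "cont phi4 z" using cont_phi[OF Nz0] by auto
  obtain M0 where M0: "\<forall>q. close M0 q z \<longrightarrow> sm (v (Nk z) + 1) (Nk q - Nk z)" using cont_Nk unfolding cont_def by blast
  obtain M1 where M1: "\<forall>q. close M1 q z \<longrightarrow> sm N (phi1 q - phi1 z)" using cts(1) unfolding cont_def by blast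
  obtain M2 where M2: "\<forall>q. close M2 q z \<longrightarrow> sm N (phi2 q - phi2 z)" using cts(2) unfolding cont_def by blast
  obtain M3 where M3: "\<forall>q. close M3 q z \<longrightarrow> sm N (phi3 q - phi3 z)" using cts(3) unfolding cont_def by blast
  obtain M4 where M4: "\<forall>q. close M4 q z \<longrightarrow> sm N (phi4 q - phi4 z)" using cts(4) unfolding cont_def by blast
  define M where "M = max M0 (max M1 (max M2 (max M3 M4)))"
  obtain q where q: "close M (vo q) z" using dense_vo by blast
  have c: "close M0 (vo q) z" "close M1 (vo q) z" "close M2 (vo q) z" "close M3 (vo q) z" "close M4 (vo q) z"
    using q by (auto simp: M_def intro: close_mono)
  have "Nk (vo q) \<noteq> 0" using v_close(1)[OF Nz0] M0 c(1) by blast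
  then have qn: "qnorm \<alpha> \<beta> q \<noteq> 0" using qnorm_vo[of q] by auto
  define x where "x = phiQ \<alpha> \<beta> q"
  have "qnorm \<alpha> \<beta> x = 1" using qnorm_phiQ[OF qn] x_def by simp
  moreover have "close N (vo x) y"
  proof -
    have "sm N (phi1 (vo q) - phi1 z)" "sm N (phi2 (vo q) - phi2 z)" "sm N (phi3 (vo q) - phi3 z)"
      "sm N (phi4 (vo q) - phi4 z)" using M1 M2 M3 M4 c by blast+
    then show ?thesis unfolding x_def vo_phiQ ye ph by simp
  qed
  ultimately show ?thesis by blast
qed

fun qneg :: "rat m2 \<Rightarrow> rat m2" where "qneg (a,b,c,d) = (-a,-b,-c,-d)"

lemma APPROX:
  assumes y: "Nk y = 1"
  shows "\<exists>x. qnorm \<alpha> \<beta> x = 1 \<and> close N (vo x) y"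
proof (cases "p1 y = -1")
  case False
  then show ?thesis using CAY y by blast
next
  case True
  obtain y1 y2 y3 y4 where ye: "y = (y1,y2,y3,y4)" by (metis prod_cases4)
  define y' where "y' = (-y1,-y2,-y3,-y4)"
  have "Nk y' = 1" using y ye by (simp add: Nk_def y'_def)
  moreover have "p1 y' \<noteq> -1" using True ye by (simp add: y'_def)
  ultimately obtain x where x: "qnorm \<alpha> \<beta> x = 1" "close N (vo x) y'" using CAY by blast
  obtain x1 x2 x3 x4 where xe: "x = (x1,x2,x3,x4)" by (metis prod_cases4)
  have "qnorm \<alpha> \<beta> (qneg x) = 1" using x xe by simp
  moreover have "close N (vo (qneg x)) y"
  proof -
    have "sm N (of_rat x1 + y1)" "sm N (of_rat x2 + y2)" "sm N (of_rat x3 + y3)" "sm N (of_rat x4 + y4)"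
      using x(2) xe by (simp_all add: y'_def)
    moreover have "sm N (- a - b)" if "sm N (a + b)" for a b :: 'k
    proof -
      have "- a - b = - (a + b)" by simp
      then show ?thesis using that sm_uminus by metis
    qed
    ultimately show ?thesis using xe ye by (simp add: of_rat_minus)
  qed
  ultimately show ?thesis by blast
qed

definition Mk :: "'k m2 \<Rightarrow> 'k m2" where
  "Mk y = (p1 y + p2 y * s, Bq * (p3 y + p4 y * s), p3 y - p4 y * s, p1 y - p2 y * s)"

lemma snz: "s \<noteq> 0" using s2 anz by auto

lemma mdet_Mk: "mdet (Mk y) = Nk y"
  using s2 by (cases y) (simp add: Mk_def Nk_def algebra_simps)

lemma quat_Mk: "quat_mat_act \<beta> s x = lin (Mk (vo x))"
  by (rule ext, cases x) (auto simp: Mk_def algebra_simps)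

lemma Mk_surj: "\<exists>y. Mk y = h"
proof -
  obtain h1 h2 h3 h4 where he: "h = (h1,h2,h3,h4)" by (metis prod_cases4)
  define y where "y = ((h1+h4)/2, (h1-h4)/(2*s), (h3 + h2/Bq)/2, (h2/Bq - h3)/(2*s))"
  have "Mk y = h" using snz bnz unfolding he y_def Mk_def by (simp add: field_simps)
  then show ?thesis by blast
qed

lemma DENS:
  assumes h: "mdet h = 1"
  shows "\<exists>x. qnorm \<alpha> \<beta> x = 1 \<and> near N (mmul (Mk (vo x)) (minv h))"
proof -
  obtain y where y: "Mk y = h" using Mk_surj by blast
  have Ny: "Nk y = 1" using mdet_Mk[of y] y h by simp
  obtain Ks where Ks: "Ks \<le> 0" "sm Ks s" using sm_ex_le by blast
  obtain Kb where Kb: "Kb \<le> 0" "sm Kb Bq" using sm_ex_le by blast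
  obtain Kh where Kh: "Kh \<le> 0" "bnd Kh (minv h)" using bnd_ex by blast
  define N' where "N' = N - Kh - Ks - Kb"
  obtain x where x: "qnorm \<alpha> \<beta> x = 1" "close N' (vo x) y" using APPROX[OF Ny] by blast
  obtain x1 x2 x3 x4 where xe: "x = (x1,x2,x3,x4)" by (metis prod_cases4)
  obtain y1 y2 y3 y4 where ye: "y = (y1,y2,y3,y4)" by (metis prod_cases4)
  define d1 where "d1 = of_rat x1 - y1"
  define d2 where "d2 = of_rat x2 - y2"
  define d3 where "d3 = of_rat x3 - y3"
  define d4 where "d4 = of_rat x4 - y4"
  have d: "sm N' d1" "sm N' d2" "sm N' d3" "sm N' d4" using x(2) xe ye by (simp_all add: d1_def d2_def d3_def d4_def)
  define G where "G = (d1 + d2 * s, Bq * (d3 + d4 * s), d3 - d4 * s, d1 - d2 * s)"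
  have MG: "Mk (vo x) = madd h G"
    unfolding y[symmetric] xe ye G_def Mk_def d1_def d2_def d3_def d4_def by (simp add: algebra_simps)
  have sN: "sm (N' + Ks + Kb) a" if "sm N' a" for a using that Ks Kb by (auto intro: sm_mono)
  have sNs: "sm (N' + Ks + Kb) (a * s)" if "sm N' a" for a
    using sm_mult[OF that Ks(2)] Kb by (auto intro: sm_mono)
  have "bnd (N' + Ks + Kb) G"
  proof -
    have "sm (N' + Ks) (d3 + d4 * s)"
      using d sm_mult[OF d(4) Ks(2)] Ks by (intro sm_add) (auto intro: sm_mono)
    then have "sm (Kb + (N' + Ks)) (Bq * (d3 + d4 * s))" using sm_mult[OF Kb(2)] by blast
    then show ?thesis unfolding G_def using d sN sNs by (auto intro!: sm_add sm_diff simp: algebra_simps)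
  qed
  then have "bnd (N' + Ks + Kb + Kh) (mmul G (minv h))" using bnd_mmul Kh by blast
  then have bW: "bnd N (mmul G (minv h))" by (simp add: N'_def)
  have "mmul (Mk (vo x)) (minv h) = madd I2 (mmul G (minv h))"
    unfolding MG mmul_madd_l using minv_r[of h] h by simp
  moreover have "near N (madd I2 W)" if "bnd N W" for W using that by (cases W) (simp add: I2_def)
  ultimately have "near N (mmul (Mk (vo x)) (minv h))" using bW by metis
  then show ?thesis using x(1) by blast
qed

end

context qpq begin

lemma MAIN: "weyl_transitive p v (normone \<alpha> \<beta>) (quat_mat_act \<beta> s)"
  unfolding weyl_transitive_def
proof (intro allI impI)
  fix w C1 C1' C2 C2'
  assume H: "is_chamber p v C1 \<and> is_chamber p v C1' \<and> is_chamber p v C2 \<and> is_chamber p v C2' \<and>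
        weyl_dist p v C1 C1' w \<and> weyl_dist p v C2 C2' w"
  obtain h where h: "mdet h = 1" "chamber_act (lin h) C1 = C2" "chamber_act (lin h) C1' = C2'"
    using GPTRANS H by blast
  obtain X1 X2 where X12: "C2 = {X1, X2}" "is_vertex v X1" "is_vertex v X2"
    using H unfolding is_chamber_def by blast
  obtain X3 X4 where X34: "C2' = {X3, X4}" "is_vertex v X3" "is_vertex v X4"
    using H unfolding is_chamber_def by blast
  obtain N1 where N1: "\<forall>E. mdet E = 1 \<and> near N1 E \<longrightarrow> vertex_act (lin E) X1 = X1" using FIX X12 by blast
  obtain N2 where N2: "\<forall>E. mdet E = 1 \<and> near N2 E \<longrightarrow> vertex_act (lin E) X2 = X2" using FIX X12 by blast
  obtain N3 where N3: "\<forall>E. mdet E = 1 \<and> near N3 E \<longrightarrow> vertex_act (lin E) X3 = X3" using FIX X34 by blast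
  obtain N4 where N4: "\<forall>E. mdet E = 1 \<and> near N4 E \<longrightarrow> vertex_act (lin E) X4 = X4" using FIX X34 by blast
  define N where "N = max (max N1 N2) (max N3 N4)"
  obtain x where x: "qnorm \<alpha> \<beta> x = 1" "near N (mmul (Mk (vo x)) (minv h))" using DENS[OF h(1)] by blast
  define E where "E = mmul (Mk (vo x)) (minv h)"
  have dE: "mdet E = 1" unfolding E_def using x(1) h(1) qnorm_vo[of x]
    by (simp add: mdet_mmul mdet_minv mdet_Mk)
  have nE: "near N1 E" "near N2 E" "near N3 E" "near N4 E"
    using x(2) unfolding E_def N_def by (auto intro: near_mono)
  have fx: "vertex_act (lin E) X1 = X1" "vertex_act (lin E) X2 = X2"
    "vertex_act (lin E) X3 = X3" "vertex_act (lin E) X4 = X4"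
    using N1 N2 N3 N4 dE nE by blast+
  have ME: "Mk (vo x) = mmul E h" unfolding E_def mmul_assoc using minv_l[of h] h(1) by simp
  have "chamber_act (quat_mat_act \<beta> s x) C1 = C2"
    unfolding quat_Mk ME chamber_act_comp h(2) X12(1) chamber_act_pair fx ..
  moreover have "chamber_act (quat_mat_act \<beta> s x) C1' = C2'"
    unfolding quat_Mk ME chamber_act_comp h(3) X34(1) chamber_act_pair fx ..
  moreover have "x \<in> normone \<alpha> \<beta>" using x(1) by (simp add: normone_def)
  ultimately show "\<exists>g\<in>normone \<alpha> \<beta>. chamber_act (quat_mat_act \<beta> s g) C1 = C2 \<and> chamber_act (quat_mat_act \<beta> s g) C1' = C2'"
    by blast
qed

end

theorem proposition3:
  fixes \<alpha> \<beta> :: rat and p :: nat and v :: "'k::field_char_0 \<Rightarrow> int" and s :: 'k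
  assumes "quat_division_algebra \<alpha> \<beta>"
    and "prime p" and "p \<noteq> 2"
    and "pval p \<alpha> = 0" and "pval p \<beta> = 0"
    and "is_Qp p v"
    and "s * s = of_rat \<alpha>"
  shows "weyl_transitive p v (normone \<alpha> \<beta>) (quat_mat_act \<beta> s)"
proof -
  interpret Q: qpq p v \<alpha> \<beta> s
    using assms by unfold_locales (auto simp: quat_division_algebra_def)
  show ?thesis by (rule Q.MAIN)
qed

end
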